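(* Let $S_0$ be a classical-quantum program, $\sigma_0$ a classical state and $r\ge 0$ an integer, and let $\mathcal{T}$ be an $r$-fault transition tree starting with $(S_0,\sigma_0)$. Then the map $\mathcal{E}_{\mathcal{T}}:\rho\mapsto \sum_{\langle\downarrow,\sigma,\rho'\rangle\in\mathcal{T}(\rho)}\rho'$ (sum over all leaf nodes of $\mathcal{T}(\rho)$) is well defined (the possibly infinite sum converges) and is a quantum channel, i.e. a completely positive, trace-non-increasing linear map (not necessarily trace-preserving).
   Context: Programs. Fix qubits $q_1,\dots,q_N$. A classical-quantum program (cq-prog) is generated by the grammar $S ::= S_1;S_2 \mid q:=|0\rangle \mid U(\bar q)\mid x:=\mathtt{measure}\ q \mid x:=e \mid \mathtt{if}\ b\ \mathtt{then}\ S_1\ \mathtt{else}\ S_2 \mid y:=f(x) \mid \mathtt{repeat}\ S\ \mathtt{until}\ b$, where $q$ is a qubit, $\bar q$ a list of distinct qubits, $U$ a unitary on $\bar q$, $x,y$ classical variables, $e$ a classical expression, $b$ a Boolean expression and $f$ a classical function. A configuration is a triple $\langle S,\sigma,\rho\rangle$ where $\sigma$ maps classical variables to values, $\rho$ is a partial density operator (positive semidefinite, trace $\le 1$) on the $N$ qubits, and $S$ is a program or the terminated program $\downarrow$ (with $\downarrow;S=S$). For an operator $A$ on qubits $\bar q$, $A_{\bar q}$ denotes $A$ on $\bar q$ tensored with the identity elsewhere, and $|i\rangle_q\langle j|$ denotes $|i\rangle\langle j|$ on qubit $q$. Ideal transitions $\to$: (IN) $\langle q:=|0\rangle,\sigma,\rho\rangle\to\langle\downarrow,\sigma,|0\rangle_q\langle0|\rho|0\rangle_q\langle0|+|0\rangle_q\langle1|\rho|1\rangle_q\langle0|\rangle$;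 (UT) $\langle U(\bar q),\sigma,\rho\rangle\to\langle\downarrow,\sigma,U_{\bar q}\rho U_{\bar q}^\dagger\rangle$; (M0) $\langle x:=\mathtt{measure}\ q,\sigma,\rho\rangle\to\langle\downarrow,\sigma[0/x],|0\rangle_q\langle0|\rho|0\rangle_q\langle0|\rangle$ and (M1) the same with $1$ in place of $0$; (AS) $\langle x:=e,\sigma,\rho\rangle\to\langle\downarrow,\sigma[\sigma(e)/x],\rho\rangle$; (CO) $\langle y:=f(x),\sigma,\rho\rangle\to\langle\downarrow,\sigma[f(\sigma(x))/y],\rho\rangle$; (SC) if $\langle S_1,\sigma,\rho\rangle\to\langle S_1',\sigma',\rho'\rangle$ then $\langle S_1;S_2,\sigma,\rho\rangle\to\langle S_1';S_2,\sigma',\rho'\rangle$; (CT)/(CF) $\langle \mathtt{if}\ b\ \mathtt{then}\ S_1\ \mathtt{else}\ S_2,\sigma,\rho\rangle$ goes to $\langle S_1,\sigma,\rho\rangle$ if $\sigma\models b$ and to $\langle S_2,\sigma,\rho\rangle$ otherwise; (RU) $\langle\mathtt{repeat}\ S\ \mathtt{until}\ b,\sigma,\rho\rangle\to\langle S;\mathtt{if}\ b\ \mathtt{then}\ \downarrow\ \mathtt{else}\ \{\mathtt{repeat}\ S\ \mathtt{until}\ b\},\sigma,\rho\rangle$. Faulty transitions $\leadsto$ (only quantum statements can be faulty; there is also the analogous sequencing rule): (F-IN) $\langle q:=|0\rangle,\sigma,\rho\rangle\leadsto\langle\downarrow,\sigma,\mathcal{E}_q(\rho)\rangle$ and (F-UT)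 $\langle U(\bar q),\sigma,\rho\rangle\leadsto\langle\downarrow,\sigma,\mathcal{E}_{\bar q}(\rho)\rangle$, with $\mathcal{E}_q,\mathcal{E}_{\bar q}$ arbitrary trace-preserving completely positive maps acting nontrivially only on $q$ (resp. $\bar q$); (F-M0)/(F-M1) $\langle x:=\mathtt{measure}\ q,\sigma,\rho\rangle\leadsto\langle\downarrow,\sigma[c/x],\mathcal{E}_{c,q}(\rho)\rangle$ for $c\in\{0,1\}$, with $\mathcal{E}_{c,q}$ arbitrary completely positive maps acting nontrivially only on $q$. Transition trees. For a program $S_0$, classical state $\sigma_0$ and integer $r\ge0$, an $r$-fault transition tree starting with $(S_0,\sigma_0)$ is a (possibly infinite) rooted tree whose nodes are configurations such that: the root is $\langle S_0,\sigma_0,\widetilde\rho\rangle$ with $\widetilde\rho$ an indeterminate quantum state; a node is a leaf iff its program is $\downarrow$; a node whose program begins with a measurement $x:=\mathtt{measure}\ q$ has exactly two children, generated either by (M0) and (M1), or by (F-M0) and (F-M1) with $\mathcal{E}_{0,q}+\mathcal{E}_{1,q}$ trace-preserving; every other non-leaf node has exactly one child obtained by one ideal or faulty transition; every path contains at most $r$ faulty transitions. $\mathcal{T}(\rho_0)$ denotes the tree obtained by substituting the concrete state $\rho_0$ for $\widetilde\rho$. *)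

theory Defs
  imports "HOL-Analysis.Analysis"
begin

text \<open>A (complex) matrix is an entry function; a d x d matrix is one whose entries
  vanish outside the index range below d. Basis state i (i < 2^N) of the N-qubit
  register has qubit k equal to bit k of i.\<close>

type_synonym cmat = "nat \<Rightarrow> nat \<Rightarrow> complex"

definition is_mat :: "nat \<Rightarrow> cmat \<Rightarrow> bool" where
  "is_mat d A \<longleftrightarrow> (\<forall>i j. (d \<le> i \<or> d \<le> j) \<longrightarrow> A i j = 0)"

definition mmul :: "nat \<Rightarrow> cmat \<Rightarrow> cmat \<Rightarrow> cmat" where
  "mmul d A B = (\<lambda>i j. if i < d \<and> j < d then (\<Sum>k<d. A i k * B k j) else 0)"

definition adj :: "cmat \<Rightarrow> cmat" where
  "adj A = (\<lambda>i j. cnj (A j i))"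

definition idm :: "nat \<Rightarrow> cmat" where
  "idm d = (\<lambda>i j. if i = j \<and> i < d then 1 else 0)"

definition unitm :: "nat \<Rightarrow> nat \<Rightarrow> cmat" where
  "unitm i j = (\<lambda>a b. if a = i \<and> b = j then 1 else 0)"

definition mtrace :: "nat \<Rightarrow> cmat \<Rightarrow> complex" where
  "mtrace d A = (\<Sum>i<d. A i i)"

definition psd :: "nat \<Rightarrow> cmat \<Rightarrow> bool" where
  "psd d A \<longleftrightarrow> is_mat d A \<and>
     (\<forall>v :: nat \<Rightarrow> complex. Im (\<Sum>i<d. \<Sum>j<d. cnj (v i) * A i j * v j) = 0
                           \<and> 0 \<le> Re (\<Sum>i<d. \<Sum>j<d. cnj (v i) * A i j * v j))"

definition density :: "nat \<Rightarrow> cmat \<Rightarrow> bool" where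
  "density d \<rho> \<longleftrightarrow> psd d \<rho> \<and> Re (mtrace d \<rho>) \<le> 1"

definition unitary :: "nat \<Rightarrow> cmat \<Rightarrow> bool" where
  "unitary d U \<longleftrightarrow> is_mat d U \<and> mmul d (adj U) U = idm d"

definition linear_on :: "nat \<Rightarrow> (cmat \<Rightarrow> cmat) \<Rightarrow> bool" where
  "linear_on n E \<longleftrightarrow> (\<forall>A B c. is_mat n A \<longrightarrow> is_mat n B \<longrightarrow>
      E (\<lambda>i j. c * A i j + B i j) = (\<lambda>i j. c * E A i j + E B i j))"

text \<open>E \<otimes> id_m for a linear map E on n x n matrices (system index a mod n,
  ancilla index a div n), determined by the action of E on matrix units.\<close>
definition ampl :: "nat \<Rightarrow> nat \<Rightarrow> (cmat \<Rightarrow> cmat) \<Rightarrow> cmat \<Rightarrow> cmat" where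
  "ampl n m E X = (\<lambda>a b. if a < n * m \<and> b < n * m then
     (\<Sum>i<n*m. \<Sum>j<n*m. if i div n = a div n \<and> j div n = b div n
        then X i j * E (unitm (i mod n) (j mod n)) (a mod n) (b mod n) else 0) else 0)"

definition completely_positive :: "nat \<Rightarrow> (cmat \<Rightarrow> cmat) \<Rightarrow> bool" where
  "completely_positive n E \<longleftrightarrow>
     (\<forall>A. is_mat n A \<longrightarrow> is_mat n (E A)) \<and> linear_on n E \<and>
     (\<forall>m X. psd (n * m) X \<longrightarrow> psd (n * m) (ampl n m E X))"

definition trace_preserving :: "nat \<Rightarrow> (cmat \<Rightarrow> cmat) \<Rightarrow> bool" where
  "trace_preserving n E \<longleftrightarrow> (\<forall>A. is_mat n A \<longrightarrow> mtrace n (E A) = mtrace n A)"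

definition trace_nonincreasing :: "nat \<Rightarrow> (cmat \<Rightarrow> cmat) \<Rightarrow> bool" where
  "trace_nonincreasing n E \<longleftrightarrow> (\<forall>\<rho>. psd n \<rho> \<longrightarrow> Re (mtrace n (E \<rho>)) \<le> Re (mtrace n \<rho>))"

definition quantum_channel :: "nat \<Rightarrow> (cmat \<Rightarrow> cmat) \<Rightarrow> bool" where
  "quantum_channel n E \<longleftrightarrow> completely_positive n E \<and> trace_nonincreasing n E"

text \<open>Local index of basis state i w.r.t. the qubit list qs (qs!0 is the least significant bit).\<close>
definition sub_idx :: "nat list \<Rightarrow> nat \<Rightarrow> nat" where
  "sub_idx qs i = (\<Sum>t<length qs. if bit i (qs ! t) then 2 ^ t else 0)"

definition agree_off :: "nat \<Rightarrow> nat list \<Rightarrow> nat \<Rightarrow> nat \<Rightarrow> bool" where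
  "agree_off N qs i j \<longleftrightarrow> (\<forall>k<N. k \<notin> set qs \<longrightarrow> bit i k = bit j k)"

text \<open>A_qs: the operator A on qubits qs tensored with the identity elsewhere.\<close>
definition emb :: "nat \<Rightarrow> nat list \<Rightarrow> cmat \<Rightarrow> cmat" where
  "emb N qs A = (\<lambda>i j. if i < 2^N \<and> j < 2^N \<and> agree_off N qs i j
       then A (sub_idx qs i) (sub_idx qs j) else 0)"

text \<open>E_qs: a superoperator E on qubits qs tensored with the identity channel elsewhere.\<close>
definition lift :: "nat \<Rightarrow> nat list \<Rightarrow> (cmat \<Rightarrow> cmat) \<Rightarrow> cmat \<Rightarrow> cmat" where
  "lift N qs E X = (\<lambda>a b. if a < 2^N \<and> b < 2^N then
     (\<Sum>i<2^N. \<Sum>j<2^N. if agree_off N qs i a \<and> agree_off N qs j b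
        then X i j * E (unitm (sub_idx qs i) (sub_idx qs j)) (sub_idx qs a) (sub_idx qs b)
        else 0) else 0)"

definition local_cp :: "nat \<Rightarrow> nat list \<Rightarrow> (cmat \<Rightarrow> cmat) \<Rightarrow> bool" where
  "local_cp N qs E \<longleftrightarrow> (\<exists>E'. completely_positive (2 ^ length qs) E' \<and> E = lift N qs E')"

definition local_cptp :: "nat \<Rightarrow> nat list \<Rightarrow> (cmat \<Rightarrow> cmat) \<Rightarrow> bool" where
  "local_cptp N qs E \<longleftrightarrow> (\<exists>E'. completely_positive (2 ^ length qs) E'
       \<and> trace_preserving (2 ^ length qs) E' \<and> E = lift N qs E')"

definition sandwich :: "nat \<Rightarrow> cmat \<Rightarrow> cmat \<Rightarrow> cmat" where
  "sandwich N K \<rho> = mmul (2^N) (mmul (2^N) K \<rho>) (adj K)"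

definition madd :: "cmat \<Rightarrow> cmat \<Rightarrow> cmat" where
  "madd A B = (\<lambda>i j. A i j + B i j)"

definition ket_bra :: "nat \<Rightarrow> nat \<Rightarrow> nat \<Rightarrow> nat \<Rightarrow> cmat" where
  "ket_bra N q i j = emb N [q] (unitm i j)"

definition init_map :: "nat \<Rightarrow> nat \<Rightarrow> cmat \<Rightarrow> cmat" where
  "init_map N q \<rho> = madd (sandwich N (ket_bra N q 0 0) \<rho>) (sandwich N (ket_bra N q 0 1) \<rho>)"

definition meas_map :: "nat \<Rightarrow> nat \<Rightarrow> nat \<Rightarrow> cmat \<Rightarrow> cmat" where
  "meas_map N q c \<rho> = sandwich N (ket_bra N q c c) \<rho>"

text \<open>Classical states are maps 'x \<Rightarrow> 'v; expressions, Boolean expressions and classical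
  functions are given semantically. Skip is the terminated program \<down>.\<close>
datatype ('x, 'v) prog =
    Skip
  | Seq "('x, 'v) prog" "('x, 'v) prog"
  | Init nat
  | Unit cmat "nat list"
  | Meas 'x nat
  | Assign 'x "('x \<Rightarrow> 'v) \<Rightarrow> 'v"
  | If "('x \<Rightarrow> 'v) \<Rightarrow> bool" "('x, 'v) prog" "('x, 'v) prog"
  | Fn 'x "'v \<Rightarrow> 'v" 'x
  | Repeat "('x, 'v) prog" "('x \<Rightarrow> 'v) \<Rightarrow> bool"

fun wf_prog :: "nat \<Rightarrow> ('x, 'v) prog \<Rightarrow> bool" where
  "wf_prog N Skip = False"
| "wf_prog N (Seq S1 S2) = (wf_prog N S1 \<and> wf_prog N S2)"
| "wf_prog N (Init q) = (q < N)"
| "wf_prog N (Unit U qs) = (distinct qs \<and> (\<forall>q\<in>set qs. q < N) \<and> unitary (2 ^ length qs) U)"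
| "wf_prog N (Meas x q) = (q < N)"
| "wf_prog N (Assign x e) = True"
| "wf_prog N (If b S1 S2) = (wf_prog N S1 \<and> wf_prog N S2)"
| "wf_prog N (Fn y f x) = True"
| "wf_prog N (Repeat S b) = wf_prog N S"

definition seq :: "('x, 'v) prog \<Rightarrow> ('x, 'v) prog \<Rightarrow> ('x, 'v) prog" where
  "seq S1 S2 = (if S1 = Skip then S2 else Seq S1 S2)"

fun meas_head :: "('x, 'v) prog \<Rightarrow> bool" where
  "meas_head (Meas x q) = True"
| "meas_head (Seq S1 S2) = meas_head S1"
| "meas_head _ = False"

text \<open>Non-measurement transitions (ideal: flag False; faulty: flag True), with the
  quantum map F applied to the quantum state.\<close>
inductive step :: "nat \<Rightarrow> ('x, 'v) prog \<Rightarrow> ('x \<Rightarrow> 'v) \<Rightarrow> bool \<Rightarrow> (cmat \<Rightarrow> cmat)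
    \<Rightarrow> ('x, 'v) prog \<Rightarrow> ('x \<Rightarrow> 'v) \<Rightarrow> bool" for N where
  IN: "step N (Init q) \<sigma> False (init_map N q) Skip \<sigma>"
| UT: "step N (Unit U qs) \<sigma> False (sandwich N (emb N qs U)) Skip \<sigma>"
| AS: "step N (Assign x e) \<sigma> False id Skip (\<sigma>(x := e \<sigma>))"
| CO: "step N (Fn y f x) \<sigma> False id Skip (\<sigma>(y := f (\<sigma> x)))"
| CT: "b \<sigma> \<Longrightarrow> step N (If b S1 S2) \<sigma> False id S1 \<sigma>"
| CF: "\<not> b \<sigma> \<Longrightarrow> step N (If b S1 S2) \<sigma> False id S2 \<sigma>"
| RU: "step N (Repeat S b) \<sigma> False id (Seq S (If b Skip (Repeat S b))) \<sigma>"
| F_IN: "local_cptp N [q] E \<Longrightarrow> step N (Init q) \<sigma> True E Skip \<sigma>"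
| F_UT: "local_cptp N qs E \<Longrightarrow> step N (Unit U qs) \<sigma> True E Skip \<sigma>"
| SC: "step N S1 \<sigma> fl F S1' \<sigma>' \<Longrightarrow> step N (Seq S1 S2) \<sigma> fl F (seq S1' S2) \<sigma>'"

text \<open>Measurement transitions: the pair of transitions producing the two children,
  either (M0),(M1) or (F-M0),(F-M1) with E0 + E1 trace preserving.\<close>
inductive mstep :: "nat \<Rightarrow> ('x, 'v::{zero,one}) prog \<Rightarrow> ('x \<Rightarrow> 'v) \<Rightarrow> bool
    \<Rightarrow> (cmat \<Rightarrow> cmat) \<Rightarrow> ('x, 'v) prog \<Rightarrow> ('x \<Rightarrow> 'v)
    \<Rightarrow> (cmat \<Rightarrow> cmat) \<Rightarrow> ('x, 'v) prog \<Rightarrow> ('x \<Rightarrow> 'v) \<Rightarrow> bool" for N where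
  M: "mstep N (Meas x q) \<sigma> False (meas_map N q 0) Skip (\<sigma>(x := 0))
                                  (meas_map N q 1) Skip (\<sigma>(x := 1))"
| F_M: "local_cp N [q] E0 \<Longrightarrow> local_cp N [q] E1 \<Longrightarrow>
        trace_preserving (2^N) (\<lambda>\<rho>. madd (E0 \<rho>) (E1 \<rho>)) \<Longrightarrow>
        mstep N (Meas x q) \<sigma> True E0 Skip (\<sigma>(x := 0)) E1 Skip (\<sigma>(x := 1))"
| SC: "mstep N S1 \<sigma> fl F0 S0' \<sigma>0 F1 S1' \<sigma>1 \<Longrightarrow>
       mstep N (Seq S1 S2) \<sigma> fl F0 (seq S0' S2) \<sigma>0 F1 (seq S1' S2) \<sigma>1"

text \<open>A (possibly infinite) rooted tree is given by partial labelling of addresses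
  (bool lists; child c of node p is p @ [c]). A node label is (S, \<sigma>, \<Phi>, fl):
  the configuration <S, \<sigma>, \<Phi> \<rho>~> with \<rho>~ indeterminate (\<Phi> is the quantum state as a
  function of the root state), and fl records whether the transition into the node
  was faulty.\<close>
type_synonym ('x, 'v) tree = "bool list \<Rightarrow> (('x, 'v) prog \<times> ('x \<Rightarrow> 'v) \<times> (cmat \<Rightarrow> cmat) \<times> bool) option"

definition faulty_at :: "('x, 'v) tree \<Rightarrow> bool list \<Rightarrow> bool" where
  "faulty_at T p = (case T p of Some (_, _, _, fl) \<Rightarrow> fl | None \<Rightarrow> False)"

definition fault_tree :: "nat \<Rightarrow> nat \<Rightarrow> ('x, 'v::{zero,one}) prog \<Rightarrow> ('x \<Rightarrow> 'v)
    \<Rightarrow> ('x, 'v) tree \<Rightarrow> bool" where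
  "fault_tree N r S0 \<sigma>0 T \<longleftrightarrow>
     T [] = Some (S0, \<sigma>0, id, False) \<and>
     (\<forall>p c. T (p @ [c]) \<noteq> None \<longrightarrow> T p \<noteq> None) \<and>
     (\<forall>p S \<sigma> \<Phi> fl. T p = Some (S, \<sigma>, \<Phi>, fl) \<longrightarrow>
        (S = Skip \<longrightarrow> T (p @ [False]) = None \<and> T (p @ [True]) = None) \<and>
        (meas_head S \<longrightarrow> (\<exists>f F0 S0' \<sigma>0' F1 S1' \<sigma>1'.
            mstep N S \<sigma> f F0 S0' \<sigma>0' F1 S1' \<sigma>1' \<and>
            T (p @ [False]) = Some (S0', \<sigma>0', F0 \<circ> \<Phi>, f) \<and>
            T (p @ [True]) = Some (S1', \<sigma>1', F1 \<circ> \<Phi>, f))) \<and>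
        (S \<noteq> Skip \<and> \<not> meas_head S \<longrightarrow> (\<exists>f F S' \<sigma>'.
            step N S \<sigma> f F S' \<sigma>' \<and>
            T (p @ [False]) = Some (S', \<sigma>', F \<circ> \<Phi>, f) \<and> T (p @ [True]) = None))) \<and>
     (\<forall>p. T p \<noteq> None \<longrightarrow> card {k. 0 < k \<and> k \<le> length p \<and> faulty_at T (take k p)} \<le> r)"

definition leaves :: "('x, 'v) tree \<Rightarrow> bool list set" where
  "leaves T = {p. \<exists>\<sigma> \<Phi> fl. T p = Some (Skip, \<sigma>, \<Phi>, fl)}"

definition node_state :: "('x, 'v) tree \<Rightarrow> bool list \<Rightarrow> cmat \<Rightarrow> cmat" where
  "node_state T p \<rho> = (case T p of Some (_, _, \<Phi>, _) \<Rightarrow> \<Phi> \<rho> | None \<Rightarrow> (\<lambda>_ _. 0))"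

definition tree_map :: "('x, 'v) tree \<Rightarrow> cmat \<Rightarrow> cmat" where
  "tree_map T \<rho> = (\<lambda>i j. \<Sum>\<^sub>\<infinity>p\<in>leaves T. node_state T p \<rho> i j)"

end

theory Submission
  imports Defs "HOL-Library.Nat_Bijection"
begin


definition qf :: "'a set \<Rightarrow> ('a \<Rightarrow> 'a \<Rightarrow> complex) \<Rightarrow> ('a \<Rightarrow> complex) \<Rightarrow> complex" where
  "qf A X v = (\<Sum>x\<in>A. \<Sum>y\<in>A. cnj (v x) * X x y * v y)"

definition psdS :: "'a set \<Rightarrow> ('a \<Rightarrow> 'a \<Rightarrow> complex) \<Rightarrow> bool" where
  "psdS A X \<longleftrightarrow> (\<forall>v. 0 \<le> qf A X v)"

lemma psd_iff: "psd d A \<longleftrightarrow> is_mat d A \<and> psdS {..<d} A"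
  by (auto simp: psd_def psdS_def qf_def less_eq_complex_def)

lemma qf_cong: "(\<And>x y. x \<in> A \<Longrightarrow> y \<in> A \<Longrightarrow> X x y = Y x y) \<Longrightarrow> qf A X v = qf A Y v"
  unfolding qf_def by (intro sum.cong refl) auto

lemma psdS_cong: "(\<And>x y. x \<in> A \<Longrightarrow> y \<in> A \<Longrightarrow> X x y = Y x y) \<Longrightarrow> psdS A X \<longleftrightarrow> psdS A Y"
  unfolding psdS_def using qf_cong by metis

lemma qf_reindex:
  assumes "bij_betw h A B"
  shows "qf A (\<lambda>x y. Z (h x) (h y)) v = qf B Z (\<lambda>b. v (inv_into A h b))"
proof -
  have inv: "\<And>a. a \<in> A \<Longrightarrow> inv_into A h (h a) = a" using assms bij_betw_inv_into_left by metis
  have "qf B Z (\<lambda>b. v (inv_into A h b)) = (\<Sum>x\<in>A. \<Sum>y\<in>B. cnj (v (inv_into A h (h x))) * Z (h x) y * v (inv_into A h y))"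
    unfolding qf_def using sum.reindex_bij_betw[OF assms, symmetric] by (simp add: o_def)
  also have "\<dots> = (\<Sum>x\<in>A. \<Sum>y\<in>A. cnj (v (inv_into A h (h x))) * Z (h x) (h y) * v (inv_into A h (h y)))"
    by (intro sum.cong refl) (simp add: sum.reindex_bij_betw[OF assms, symmetric])
  also have "\<dots> = qf A (\<lambda>x y. Z (h x) (h y)) v"
    unfolding qf_def by (intro sum.cong refl) (simp add: inv)
  finally show ?thesis by simp
qed

lemma psdS_reindex:
  assumes "bij_betw h A B" "psdS B Z" "\<And>x y. x \<in> A \<Longrightarrow> y \<in> A \<Longrightarrow> W x y = Z (h x) (h y)"
  shows "psdS A W"
proof -
  have "psdS A (\<lambda>x y. Z (h x) (h y))"
    using assms(2) unfolding psdS_def qf_reindex[OF assms(1)] by simp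
  thus ?thesis using psdS_cong[of A W "\<lambda>x y. Z (h x) (h y)"] assms(3) by simp
qed

lemma qf_add: "qf A (\<lambda>x y. X x y + Y x y) v = qf A X v + qf A Y v"
  unfolding qf_def by (simp add: algebra_simps sum.distrib)

lemma psdS_add: "psdS A X \<Longrightarrow> psdS A Y \<Longrightarrow> psdS A (\<lambda>x y. X x y + Y x y)"
  unfolding psdS_def qf_add by (simp add: add_nonneg_nonneg)

lemma qf_congr:
  assumes "finite A"
  shows "qf A (\<lambda>x y. \<Sum>u\<in>A. \<Sum>w\<in>A. M x u * X u w * cnj (M y w)) v
       = qf A X (\<lambda>u. \<Sum>x\<in>A. cnj (M x u) * v x)"
proof -
  have "qf A (\<lambda>x y. \<Sum>u\<in>A. \<Sum>w\<in>A. M x u * X u w * cnj (M y w)) v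
     = (\<Sum>x\<in>A. \<Sum>y\<in>A. \<Sum>u\<in>A. \<Sum>w\<in>A. cnj (v x) * M x u * X u w * cnj (M y w) * v y)"
    unfolding qf_def by (simp add: sum_distrib_left sum_distrib_right mult.assoc)
  also have "\<dots> = (\<Sum>x\<in>A. \<Sum>u\<in>A. \<Sum>y\<in>A. \<Sum>w\<in>A. cnj (v x) * M x u * X u w * cnj (M y w) * v y)"
    by (rule sum.cong[OF refl], rule sum.swap)
  also have "\<dots> = (\<Sum>u\<in>A. \<Sum>x\<in>A. \<Sum>y\<in>A. \<Sum>w\<in>A. cnj (v x) * M x u * X u w * cnj (M y w) * v y)"
    by (rule sum.swap)
  also have "\<dots> = (\<Sum>u\<in>A. \<Sum>x\<in>A. \<Sum>w\<in>A. \<Sum>y\<in>A. cnj (v x) * M x u * X u w * cnj (M y w) * v y)"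
    by (rule sum.cong[OF refl], rule sum.cong[OF refl], rule sum.swap)
  also have "\<dots> = (\<Sum>u\<in>A. \<Sum>w\<in>A. \<Sum>x\<in>A. \<Sum>y\<in>A. cnj (v x) * M x u * X u w * cnj (M y w) * v y)"
    by (rule sum.cong[OF refl], rule sum.swap)
  also have "\<dots> = qf A X (\<lambda>u. \<Sum>x\<in>A. cnj (M x u) * v x)"
    unfolding qf_def by (simp add: sum_distrib_left sum_distrib_right mult_ac)
  finally show ?thesis .
qed

lemma psdS_congr:
  assumes "finite A" "psdS A X"
  shows "psdS A (\<lambda>x y. \<Sum>u\<in>A. \<Sum>w\<in>A. M x u * X u w * cnj (M y w))"
  using assms unfolding psdS_def qf_congr[OF assms(1)] by simp



definition amplJ :: "nat \<Rightarrow> (cmat \<Rightarrow> cmat) \<Rightarrow> (nat \<times> 'j \<Rightarrow> nat \<times> 'j \<Rightarrow> complex) \<Rightarrow> nat \<times> 'j \<Rightarrow> nat \<times> 'j \<Rightarrow> complex" where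
  "amplJ n E X = (\<lambda>x y. \<Sum>i<n. \<Sum>j<n. X (i, snd x) (j, snd y) * E (unitm i j) (fst x) (fst y))"

definition gcp :: "nat \<Rightarrow> (cmat \<Rightarrow> cmat) \<Rightarrow> bool" where
  "gcp n E \<longleftrightarrow> (\<forall>J::nat set. finite J \<longrightarrow> (\<forall>X. psdS ({..<n} \<times> J) X \<longrightarrow> psdS ({..<n} \<times> J) (amplJ n E X)))"

lemma id_bij: "bij_betw id A A" by simp

lemma gcp_any:
  assumes "gcp n E" "finite (J::'j set)" "psdS ({..<n} \<times> J) X"
  shows "psdS ({..<n} \<times> J) (amplJ n E X)"
proof -
  obtain h where h: "bij_betw h J {0..<card J}" using ex_bij_betw_finite_nat[OF assms(2)] by blast
  define hi where "hi = inv_into J h"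
  have hib: "bij_betw hi {0..<card J} J" using h bij_betw_inv_into hi_def by blast
  have hih: "\<And>j. j \<in> J \<Longrightarrow> hi (h j) = j" unfolding hi_def using h bij_betw_inv_into_left by metis
  have Hb: "bij_betw (map_prod id hi) ({..<n} \<times> {0..<card J}) ({..<n} \<times> J)"
    by (rule bij_betw_map_prod[OF id_bij hib])
  define X' where "X' = (\<lambda>x y. X (map_prod id hi x) (map_prod id hi y))"
  have "psdS ({..<n} \<times> {0..<card J}) X'"
    by (rule psdS_reindex[OF Hb assms(3)]) (simp add: X'_def)
  hence P: "psdS ({..<n} \<times> {0..<card J}) (amplJ n E X')" using assms(1) unfolding gcp_def by auto
  have Gb: "bij_betw (map_prod id h) ({..<n} \<times> J) ({..<n} \<times> {0..<card J})"
    by (rule bij_betw_map_prod[OF id_bij h])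
  show ?thesis
  proof (rule psdS_reindex[OF Gb P])
    fix x y assume "x \<in> {..<n} \<times> J" "y \<in> {..<n} \<times> J"
    then show "amplJ n E X x y = amplJ n E X' (map_prod id h x) (map_prod id h y)"
      unfolding amplJ_def X'_def by (cases x, cases y) (auto simp: hih)
  qed
qed

lemma div_lt: "(a::nat) < n * m \<Longrightarrow> a div n < m"
  by (metis less_mult_imp_div_less mult.commute)

lemma lt_pm: "(k::nat) < n \<Longrightarrow> l < m \<Longrightarrow> k + n*l < n*m"
proof -
  assume "k < n" "l < m"
  hence "k + n*l < n * (l+1)" by simp
  also have "n*(l+1) \<le> n*m" by (rule mult_le_mono2) (use \<open>l<m\<close> in simp)
  finally show ?thesis .
qed

lemma pm_bij:
  fixes n m :: nat
  assumes "0 < n"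
  shows "bij_betw (\<lambda>z. fst z + n * snd z) ({..<n} \<times> {..<m}) {..<n*m}"
  apply (rule bij_betw_byWitness[where f'="\<lambda>a. (a mod n, a div n)"])
  using assms by (auto simp: div_lt lt_pm)

lemma dm_bij:
  fixes n m :: nat
  assumes "0 < n"
  shows "bij_betw (\<lambda>a. (a mod n, a div n)) {..<n*m} ({..<n} \<times> {..<m})"
  apply (rule bij_betw_byWitness[where f'="\<lambda>z. fst z + n * snd z"])
  using assms by (auto simp: div_lt lt_pm)

lemma sum_div_eq:
  fixes n m c :: nat
  assumes "0 < n" "c < m"
  shows "(\<Sum>i<n*m. if i div n = c then f i else 0) = (\<Sum>k<n. f (k + n*c))"
proof -
  have "(\<Sum>i<n*m. if i div n = c then f i else 0)
      = (\<Sum>z\<in>{..<n} \<times> {..<m}. if (fst z + n * snd z) div n = c then f (fst z + n * snd z) else 0)"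
    by (rule sum.reindex_bij_betw[OF pm_bij[OF assms(1)], symmetric])
  also have "\<dots> = (\<Sum>k<n. \<Sum>l<m. if (k + n * l) div n = c then f (k + n * l) else 0)"
    by (simp only: sum.cartesian_product split_def)
  also have "\<dots> = (\<Sum>k<n. \<Sum>l<m. if l = c then f (k + n * c) else 0)"
    using assms by (intro sum.cong refl) auto
  also have "\<dots> = (\<Sum>k<n. f (k + n*c))" using assms by simp
  finally show ?thesis .
qed

lemma ampl_eq:
  fixes n m a b c d :: nat
  assumes "0 < n" "a < n" "b < n" "c < m" "d < m"
  shows "ampl n m E X (a + n*c) (b + n*d) = (\<Sum>k<n. \<Sum>l<n. X (k + n*c) (l + n*d) * E (unitm k l) a b)"
proof -
  have lt: "a + n*c < n*m" "b + n*d < n*m" using assms by (auto simp: lt_pm)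
  have dv: "(a + n*c) div n = c" "(b + n*d) div n = d" "(a + n*c) mod n = a" "(b + n*d) mod n = b"
    using assms by auto
  have "ampl n m E X (a + n*c) (b + n*d)
     = (\<Sum>i<n*m. \<Sum>j<n*m. if i div n = c \<and> j div n = d then X i j * E (unitm (i mod n) (j mod n)) a b else 0)"
    unfolding ampl_def dv using lt by simp
  also have "\<dots> = (\<Sum>i<n*m. if i div n = c then (\<Sum>j<n*m. if j div n = d then X i j * E (unitm (i mod n) (j mod n)) a b else 0) else 0)"
    by (rule sum.cong[OF refl]) auto
  also have "\<dots> = (\<Sum>k<n. \<Sum>j<n*m. if j div n = d then X (k+n*c) j * E (unitm ((k+n*c) mod n) (j mod n)) a b else 0)"
    by (rule sum_div_eq[OF assms(1) assms(4)])
  also have "\<dots> = (\<Sum>k<n. \<Sum>l<n. X (k+n*c) (l+n*d) * E (unitm ((k + n*c) mod n) ((l + n*d) mod n)) a b)"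
    by (rule sum.cong[OF refl], rule sum_div_eq[OF assms(1) assms(5)])
  also have "\<dots> = (\<Sum>k<n. \<Sum>l<n. X (k + n*c) (l + n*d) * E (unitm k l) a b)"
    by (intro sum.cong refl) simp
  finally show ?thesis .
qed

lemma cp_imp_gcp:
  assumes cp: "completely_positive n E" and n: "0 < n"
  shows "gcp n E"
  unfolding gcp_def
proof (intro allI impI)
  fix J :: "nat set" and X assume J: "finite J" and X: "psdS ({..<n} \<times> J) X"
  define m where "m = card J"
  obtain h where h: "bij_betw h J {0..<m}" using ex_bij_betw_finite_nat[OF J] m_def by blast
  have h': "bij_betw h J {..<m}" using h by (simp add: atLeast0LessThan)
  define hi where "hi = inv_into J h"
  have hib: "bij_betw hi {..<m} J" using h' bij_betw_inv_into hi_def by blast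
  have hih: "\<And>j. j \<in> J \<Longrightarrow> hi (h j) = j" unfolding hi_def using h bij_betw_inv_into_left by metis
  define Xm where "Xm = (\<lambda>a b. if a < n*m \<and> b < n*m then X (a mod n, hi (a div n)) (b mod n, hi (b div n)) else 0)"
  have fb: "bij_betw (map_prod id hi \<circ> (\<lambda>a. (a mod n, a div n))) {..<n*m} ({..<n} \<times> J)"
    by (rule bij_betw_trans[OF dm_bij[OF n] bij_betw_map_prod[OF id_bij hib]])
  have "psdS {..<n*m} Xm"
    by (rule psdS_reindex[OF fb X]) (simp add: Xm_def)
  moreover have "is_mat (n*m) Xm" unfolding is_mat_def Xm_def by auto
  ultimately have "psd (n*m) Xm" by (simp add: psd_iff)
  hence P: "psdS {..<n*m} (ampl n m E Xm)" using cp unfolding completely_positive_def psd_iff by blast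
  have gb: "bij_betw ((\<lambda>z. fst z + n * snd z) \<circ> map_prod id h) ({..<n} \<times> J) {..<n*m}"
    by (rule bij_betw_trans[OF bij_betw_map_prod[OF id_bij h'] pm_bij[OF n]])
  show "psdS ({..<n} \<times> J) (amplJ n E X)"
  proof (rule psdS_reindex[OF gb P])
    fix x y assume x: "x \<in> {..<n} \<times> J" and y: "y \<in> {..<n} \<times> J"
    obtain a ja where xa: "x = (a, ja)" "a < n" "ja \<in> J" using x by auto
    obtain b jb where yb: "y = (b, jb)" "b < n" "jb \<in> J" using y by auto
    have hm: "h ja < m" "h jb < m" using h' xa yb by (auto simp: bij_betw_def)
    have "ampl n m E Xm (a + n * h ja) (b + n * h jb) = (\<Sum>k<n. \<Sum>l<n. Xm (k + n * h ja) (l + n * h jb) * E (unitm k l) a b)"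
      using ampl_eq[OF n xa(2) yb(2) hm] .
    also have "\<dots> = amplJ n E X x y"
    proof -
      have "\<And>k l. k < n \<Longrightarrow> l < n \<Longrightarrow> Xm (k + n * h ja) (l + n * h jb) = X (k, ja) (l, jb)"
      proof -
        fix k l assume "k < n" "l < n"
        have "k + n * h ja < n*m" "l + n * h jb < n*m"
          using \<open>k<n\<close> \<open>l<n\<close> hm by (auto simp: lt_pm)
        thus "Xm (k + n * h ja) (l + n * h jb) = X (k, ja) (l, jb)"
          unfolding Xm_def using \<open>k<n\<close> \<open>l<n\<close> xa yb by (simp add: hih)
      qed
      thus ?thesis unfolding amplJ_def xa yb by simp
    qed
    finally show "amplJ n E X x y = ampl n m E Xm (((\<lambda>z. fst z + n * snd z) \<circ> map_prod id h) x) (((\<lambda>z. fst z + n * snd z) \<circ> map_prod id h) y)"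
      by (simp add: xa yb)
  qed
qed

definition matp :: "nat \<Rightarrow> (cmat \<Rightarrow> cmat) \<Rightarrow> bool" where
  "matp n E \<longleftrightarrow> (\<forall>A. is_mat n A \<longrightarrow> is_mat n (E A))"

lemma gcp_imp_cp:
  assumes g: "gcp n E" and n: "0 < n" and m: "matp n E" and l: "linear_on n E"
  shows "completely_positive n E"
  unfolding completely_positive_def
proof (intro conjI allI impI)
  show "\<And>A. is_mat n A \<Longrightarrow> is_mat n (E A)" using m matp_def by blast
  show "linear_on n E" by fact
  fix m X assume X: "psd (n * m) X"
  define X' where "X' = (\<lambda>x y. X (fst x + n * snd x) (fst y + n * snd y))"
  have "psdS ({..<n} \<times> {..<m}) X'"
    by (rule psdS_reindex[OF pm_bij[OF n]]) (use X in \<open>simp_all add: psd_iff X'_def\<close>)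
  hence P: "psdS ({..<n} \<times> {..<m}) (amplJ n E X')" using g unfolding gcp_def by auto
  have "psdS {..<n*m} (ampl n m E X)"
  proof (rule psdS_reindex[OF dm_bij[OF n] P])
    fix x y assume x: "x \<in> {..<n*m}" and y: "y \<in> {..<n*m}"
    have d: "x div n < m" "y div n < m" using x y by (auto simp: div_lt)
    have "ampl n m E X (x mod n + n * (x div n)) (y mod n + n * (y div n)) = amplJ n E X' (x mod n, x div n) (y mod n, y div n)"
      using ampl_eq[OF n _ _ d, of "x mod n" "y mod n" E X] n unfolding amplJ_def X'_def by simp
    thus "ampl n m E X x y = amplJ n E X' (x mod n, x div n) (y mod n, y div n)" by simp
  qed
  moreover have "is_mat (n*m) (ampl n m E X)" unfolding is_mat_def ampl_def by auto
  ultimately show "psd (n * m) (ampl n m E X)" by (simp add: psd_iff)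
qed



definition lin :: "(cmat \<Rightarrow> cmat) \<Rightarrow> bool" where
  "lin E \<longleftrightarrow> (\<forall>A B c. E (\<lambda>i j. c * A i j + B i j) = (\<lambda>i j. c * E A i j + E B i j))"

lemma lin_comb: "lin E \<Longrightarrow> E (\<lambda>i j. c * A i j + B i j) = (\<lambda>i j. c * E A i j + E B i j)"
  unfolding lin_def by blast

lemma lin_zero: assumes "lin E" shows "E (\<lambda>_ _. 0) = (\<lambda>_ _. 0)"
proof -
  have "\<And>i j. E (\<lambda>_ _. 0) i j = E (\<lambda>_ _. 0) i j + E (\<lambda>_ _. 0) i j"
    using fun_cong[OF fun_cong[OF lin_comb[OF assms, of 1 "\<lambda>_ _. 0" "\<lambda>_ _. 0"]]] by simp
  thus ?thesis by auto
qed


lemma lin_sum: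
  assumes "lin E" "finite S"
  shows "E (\<lambda>i j. \<Sum>x\<in>S. c x * M x i j) = (\<lambda>i j. \<Sum>x\<in>S. c x * E (M x) i j)"
  using assms(2)
proof (induction S rule: finite_induct)
  case empty thus ?case using lin_zero[OF assms(1)] by simp
next
  case (insert x S)
  have "E (\<lambda>i j. \<Sum>y\<in>insert x S. c y * M y i j) = E (\<lambda>i j. c x * M x i j + (\<Sum>y\<in>S. c y * M y i j))"
    using insert by simp
  also have "\<dots> = (\<lambda>i j. c x * E (M x) i j + E (\<lambda>i j. \<Sum>y\<in>S. c y * M y i j) i j)"
    by (rule lin_comb[OF assms(1)])
  finally show ?case using insert by simp
qed

lemma mat_expand:
  assumes "is_mat n A"
  shows "A = (\<lambda>i j. \<Sum>z\<in>{..<n} \<times> {..<n}. A (fst z) (snd z) * unitm (fst z) (snd z) i j)"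
proof (intro ext)
  fix i j
  show "A i j = (\<Sum>z\<in>{..<n} \<times> {..<n}. A (fst z) (snd z) * unitm (fst z) (snd z) i j)"
  proof (cases "i < n \<and> j < n")
    case True
    have "(\<Sum>z\<in>{..<n} \<times> {..<n}. A (fst z) (snd z) * unitm (fst z) (snd z) i j)
        = (\<Sum>z\<in>{..<n} \<times> {..<n}. if z = (i, j) then A i j else 0)"
      by (intro sum.cong refl) (auto simp: unitm_def)
    also have "\<dots> = A i j" using True by simp
    finally show ?thesis by simp
  next
    case False
    hence "A i j = 0" using assms unfolding is_mat_def by auto
    moreover have "(\<Sum>z\<in>{..<n} \<times> {..<n}. A (fst z) (snd z) * unitm (fst z) (snd z) i j) = 0"
      using False by (intro sum.neutral) (auto simp: unitm_def)
    ultimately show ?thesis by simp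
  qed
qed

lemma lin_expand:
  assumes "lin E" "is_mat n A"
  shows "E A = (\<lambda>a b. \<Sum>k<n. \<Sum>l<n. A k l * E (unitm k l) a b)"
proof -
  have "E A = E (\<lambda>i j. \<Sum>z\<in>{..<n} \<times> {..<n}. A (fst z) (snd z) * unitm (fst z) (snd z) i j)"
    using mat_expand[OF assms(2)] by simp
  also have "\<dots> = (\<lambda>a b. \<Sum>z\<in>{..<n} \<times> {..<n}. A (fst z) (snd z) * E (unitm (fst z) (snd z)) a b)"
    by (rule lin_sum[OF assms(1)]) simp
  also have "\<dots> = (\<lambda>a b. \<Sum>k<n. \<Sum>l<n. A k l * E (unitm k l) a b)"
    by (simp only: sum.cartesian_product split_def)
  finally show ?thesis .
qed

lemma unitm_mat: "i < n \<Longrightarrow> j < n \<Longrightarrow> is_mat n (unitm i j)"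
  unfolding is_mat_def unitm_def by auto

lemma sum4_swap:
  "(\<Sum>i\<in>A. \<Sum>j\<in>B. \<Sum>k\<in>C. \<Sum>l\<in>D. f i j k l) = (\<Sum>k\<in>C. \<Sum>l\<in>D. \<Sum>i\<in>A. \<Sum>j\<in>B. f i j k l)"
proof -
  have "(\<Sum>i\<in>A. \<Sum>j\<in>B. \<Sum>k\<in>C. \<Sum>l\<in>D. f i j k l) = (\<Sum>i\<in>A. \<Sum>k\<in>C. \<Sum>j\<in>B. \<Sum>l\<in>D. f i j k l)"
    by (rule sum.cong[OF refl], rule sum.swap)
  also have "\<dots> = (\<Sum>k\<in>C. \<Sum>i\<in>A. \<Sum>j\<in>B. \<Sum>l\<in>D. f i j k l)" by (rule sum.swap)
  also have "\<dots> = (\<Sum>k\<in>C. \<Sum>i\<in>A. \<Sum>l\<in>D. \<Sum>j\<in>B. f i j k l)"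
    by (rule sum.cong[OF refl], rule sum.cong[OF refl], rule sum.swap)
  also have "\<dots> = (\<Sum>k\<in>C. \<Sum>l\<in>D. \<Sum>i\<in>A. \<Sum>j\<in>B. f i j k l)"
    by (rule sum.cong[OF refl], rule sum.swap)
  finally show ?thesis .
qed

lemma amplJ_comp:
  assumes "lin F" "matp n G"
  shows "amplJ n (F \<circ> G) X = amplJ n F (amplJ n G X)"
proof (intro ext)
  fix x y
  have "amplJ n (F \<circ> G) X x y = (\<Sum>i<n. \<Sum>j<n. X (i, snd x) (j, snd y) *
            (\<Sum>k<n. \<Sum>l<n. G (unitm i j) k l * F (unitm k l) (fst x) (fst y)))"
  proof -
    have "\<And>i j. i < n \<Longrightarrow> j < n \<Longrightarrow> F (G (unitm i j)) (fst x) (fst y) = (\<Sum>k<n. \<Sum>l<n. G (unitm i j) k l * F (unitm k l) (fst x) (fst y))"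
    proof -
      fix i j assume "i < n" "j < n"
      hence "is_mat n (G (unitm i j))" using assms(2) unitm_mat unfolding matp_def by blast
      from lin_expand[OF assms(1) this] show "F (G (unitm i j)) (fst x) (fst y) = (\<Sum>k<n. \<Sum>l<n. G (unitm i j) k l * F (unitm k l) (fst x) (fst y))"
        by simp
    qed
    thus ?thesis unfolding amplJ_def by (intro sum.cong refl) simp
  qed
  also have "\<dots> = (\<Sum>i<n. \<Sum>j<n. \<Sum>k<n. \<Sum>l<n. X (i, snd x) (j, snd y) * G (unitm i j) k l * F (unitm k l) (fst x) (fst y))"
    by (simp add: sum_distrib_left mult.assoc)
  also have "\<dots> = (\<Sum>k<n. \<Sum>l<n. \<Sum>i<n. \<Sum>j<n. X (i, snd x) (j, snd y) * G (unitm i j) k l * F (unitm k l) (fst x) (fst y))"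
    by (rule sum4_swap)
  also have "\<dots> = amplJ n F (amplJ n G X) x y"
    unfolding amplJ_def by (simp add: sum_distrib_right)
  finally show "amplJ n (F \<circ> G) X x y = amplJ n F (amplJ n G X) x y" .
qed

lemma gcp_comp:
  assumes "gcp n F" "gcp n G" "lin F" "matp n G"
  shows "gcp n (F \<circ> G)"
  using assms unfolding gcp_def amplJ_comp[OF assms(3,4)] by blast

definition madd2 :: "(cmat \<Rightarrow> cmat) \<Rightarrow> (cmat \<Rightarrow> cmat) \<Rightarrow> cmat \<Rightarrow> cmat" where
  "madd2 F G = (\<lambda>\<rho>. madd (F \<rho>) (G \<rho>))"

lemma amplJ_add: "amplJ n (madd2 F G) X = (\<lambda>x y. amplJ n F X x y + amplJ n G X x y)"
  unfolding amplJ_def madd2_def madd_def by (simp add: algebra_simps sum.distrib)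

lemma gcp_add: "gcp n F \<Longrightarrow> gcp n G \<Longrightarrow> gcp n (madd2 F G)"
  unfolding gcp_def amplJ_add by (auto intro: psdS_add)

lemma amplJ_id:
  assumes "fst x < n" "fst y < n" shows "amplJ n id X x y = X x y"
proof -
  obtain a ja b jb where xy: "x = (a, ja)" "y = (b, jb)" by (cases x, cases y) auto
  have a: "a < n" and b: "b < n" using assms xy by auto
  have inner: "\<And>i. (\<Sum>j<n. X (i,ja) (j,jb) * id (unitm i j) a b) = (if i = a then X (i,ja) (b,jb) else 0)"
  proof -
    fix i
    have "(\<Sum>j<n. X (i,ja) (j,jb) * id (unitm i j) a b) = (\<Sum>j<n. if j = b then (if i = a then X (i,ja) (j,jb) else 0) else 0)"
      by (intro sum.cong refl) (auto simp: unitm_def)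
    also have "\<dots> = (if i = a then X (i,ja) (b,jb) else 0)" using b by simp
    finally show "(\<Sum>j<n. X (i,ja) (j,jb) * id (unitm i j) a b) = (if i = a then X (i,ja) (b,jb) else 0)" .
  qed
  have "amplJ n id X x y = (\<Sum>i<n. if i = a then X (i,ja) (b,jb) else 0)"
    unfolding amplJ_def xy using inner by simp
  also have "\<dots> = X x y" using a xy by simp
  finally show ?thesis .
qed

lemma gcp_id: "gcp n id"
  unfolding gcp_def
proof (intro allI impI)
  fix J :: "nat set" and X assume "finite J" "psdS ({..<n} \<times> J) X"
  thus "psdS ({..<n} \<times> J) (amplJ n id X)"
  proof -
    have "psdS ({..<n} \<times> J) (amplJ n id X) = psdS ({..<n} \<times> J) X"
      by (rule psdS_cong, rule amplJ_id) auto
    thus ?thesis using \<open>psdS ({..<n} \<times> J) X\<close> by simp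
  qed
qed



definition sw :: "nat \<Rightarrow> cmat \<Rightarrow> cmat \<Rightarrow> cmat" where
  "sw d K \<rho> = mmul d (mmul d K \<rho>) (adj K)"

lemma sandwich_sw: "sandwich N K = sw (2^N) K"
  unfolding sandwich_def sw_def by (rule ext) simp

lemma mmul_unit_right:
  assumes "i < d" "j < d"
  shows "mmul d K (unitm i j) a l = (if a < d \<and> l < d \<and> l = j then K a i else 0)"
proof (cases "a < d \<and> l < d")
  case True
  have "(\<Sum>k<d. K a k * unitm i j k l) = (\<Sum>k<d. if k = i then (if l = j then K a i else 0) else 0)"
    by (intro sum.cong refl) (auto simp: unitm_def)
  also have "\<dots> = (if l = j then K a i else 0)" using assms by simp
  finally show ?thesis unfolding mmul_def using True by simp
next
  case False thus ?thesis unfolding mmul_def by auto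
qed

lemma sw_unit:
  assumes "i < d" "j < d"
  shows "sw d K (unitm i j) a b = (if a < d \<and> b < d then K a i * cnj (K b j) else 0)"
proof (cases "a < d \<and> b < d")
  case True
  have "(\<Sum>l<d. mmul d K (unitm i j) a l * adj K l b) = (\<Sum>l<d. if l = j then K a i * cnj (K b j) else 0)"
    by (intro sum.cong refl) (auto simp: mmul_unit_right[OF assms] adj_def True)
  also have "\<dots> = K a i * cnj (K b j)" using assms by simp
  finally show ?thesis unfolding sw_def mmul_def[of d "mmul d K (unitm i j)"] using True by simp
next
  case False thus ?thesis unfolding sw_def mmul_def by auto
qed

lemma cnj_if: "cnj (if P then x else y) = (if P then cnj x else cnj y)" by simp

lemma sum_prod_delta:
  fixes c :: "nat \<Rightarrow> complex" and g :: "nat \<times> 'j \<Rightarrow> complex"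
  assumes "finite J" "ja \<in> J"
  shows "(\<Sum>u\<in>{..<d} \<times> J. (if ja = snd u then c (fst u) else 0) * g u) = (\<Sum>i<d. c i * g (i, ja))"
proof -
  have "(\<Sum>u\<in>{..<d} \<times> J. (if ja = snd u then c (fst u) else 0) * g u)
      = (\<Sum>i<d. \<Sum>ji\<in>J. (if ja = ji then c i else 0) * g (i, ji))"
    by (simp only: sum.cartesian_product split_def prod.collapse)
  also have "\<dots> = (\<Sum>i<d. \<Sum>ji\<in>J. if ja = ji then c i * g (i, ji) else 0)"
    by (intro sum.cong refl) simp
  also have "\<dots> = (\<Sum>i<d. c i * g (i, ja))" using assms by simp
  finally show ?thesis .
qed

lemma gcp_sw: "gcp d (sw d K)"
  unfolding gcp_def
proof (intro allI impI)
  fix J :: "nat set" and X assume J: "finite J" and X: "psdS ({..<d} \<times> J) X"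
  let ?A = "{..<d} \<times> J"
  define M :: "nat \<times> nat \<Rightarrow> nat \<times> nat \<Rightarrow> complex" where "M = (\<lambda>x u. if snd x = snd u then K (fst x) (fst u) else 0)"
  have P: "psdS ?A (\<lambda>x y. \<Sum>u\<in>?A. \<Sum>w\<in>?A. M x u * X u w * cnj (M y w))"
    by (rule psdS_congr[OF _ X]) (use J in simp)
  show "psdS ?A (amplJ d (sw d K) X)"
  proof (rule iffD1[OF psdS_cong P])
    fix x y assume x: "x \<in> ?A" and y: "y \<in> ?A"
    obtain a ja b jb where xy: "x = (a, ja)" "y = (b, jb)" by (cases x, cases y) auto
    have a: "a < d" "ja \<in> J" and b: "b < d" "jb \<in> J" using x y xy by auto
    have "(\<Sum>u\<in>?A. \<Sum>w\<in>?A. M x u * X u w * cnj (M y w))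
        = (\<Sum>u\<in>?A. (if ja = snd u then K a (fst u) else 0) * (\<Sum>w\<in>?A. (if jb = snd w then cnj (K b (fst w)) else 0) * X u w))"
      unfolding M_def xy fst_conv snd_conv cnj_if complex_cnj_zero by (simp add: sum_distrib_left mult_ac)
    also have "\<dots> = (\<Sum>i<d. K a i * (\<Sum>w\<in>?A. (if jb = snd w then cnj (K b (fst w)) else 0) * X (i, ja) w))"
      by (rule sum_prod_delta[OF J a(2)])
    also have "\<dots> = (\<Sum>i<d. K a i * (\<Sum>j<d. cnj (K b j) * X (i, ja) (j, jb)))"
      by (intro sum.cong refl arg_cong2[where f=times] sum_prod_delta[OF J b(2)])
    also have "\<dots> = (\<Sum>i<d. \<Sum>j<d. X (i, ja) (j, jb) * sw d K (unitm i j) a b)"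
      using a b by (simp add: sw_unit sum_distrib_left mult_ac)
    also have "\<dots> = amplJ d (sw d K) X x y" unfolding amplJ_def xy by simp
    finally show "(\<Sum>u\<in>?A. \<Sum>w\<in>?A. M x u * X u w * cnj (M y w)) = amplJ d (sw d K) X x y" .
  qed
qed

lemma mmul_lin_left: "mmul d (\<lambda>i j. c * A i j + B i j) R = (\<lambda>i j. c * mmul d A R i j + mmul d B R i j)"
  unfolding mmul_def by (intro ext) (simp add: algebra_simps sum.distrib sum_distrib_left)

lemma mmul_lin_right: "mmul d R (\<lambda>i j. c * A i j + B i j) = (\<lambda>i j. c * mmul d R A i j + mmul d R B i j)"
  unfolding mmul_def by (intro ext) (simp add: algebra_simps sum.distrib sum_distrib_left)

lemma lin_sw: "lin (sw d K)"
  unfolding lin_def sw_def by (simp add: mmul_lin_left mmul_lin_right)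

lemma mat_mmul: "is_mat d (mmul d A B)"
  unfolding is_mat_def mmul_def by auto

lemma matp_sw: "matp d (sw d K)"
  unfolding matp_def sw_def by (simp add: mat_mmul)

lemma gcp_psd:
  assumes g: "gcp n E" and l: "lin E" and m: "matp n E" and r: "psd n \<rho>"
  shows "psd n (E \<rho>)"
proof -
  have rm: "is_mat n \<rho>" and rp: "psdS {..<n} \<rho>" using r by (auto simp: psd_iff)
  define X :: "nat \<times> nat \<Rightarrow> nat \<times> nat \<Rightarrow> complex" where "X = (\<lambda>x y. \<rho> (fst x) (fst y))"
  have b1: "bij_betw fst ({..<n} \<times> {0::nat}) {..<n}"
    by (rule bij_betw_byWitness[where f'="\<lambda>a. (a, 0)"]) auto
  have "psdS ({..<n} \<times> {0::nat}) X"
    by (rule psdS_reindex[OF b1 rp]) (simp add: X_def)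
  hence P: "psdS ({..<n} \<times> {0::nat}) (amplJ n E X)" using g unfolding gcp_def by blast
  have b2: "bij_betw (\<lambda>a. (a, 0::nat)) {..<n} ({..<n} \<times> {0::nat})"
    by (rule bij_betw_byWitness[where f'="fst"]) auto
  have "psdS {..<n} (E \<rho>)"
  proof (rule psdS_reindex[OF b2 P])
    fix a b assume "a \<in> {..<n}" "b \<in> {..<n}"
    show "E \<rho> a b = amplJ n E X (a, 0) (b, 0)"
      unfolding amplJ_def X_def using lin_expand[OF l rm] by simp
  qed
  moreover have "is_mat n (E \<rho>)" using m rm unfolding matp_def by blast
  ultimately show ?thesis by (simp add: psd_iff)
qed



lemma bit_decode: "bit (i::nat) x \<longleftrightarrow> x \<in> set_decode i"
  by (simp add: set_decode_def bit_iff_odd)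

lemma sub_idx_encode: "sub_idx qs i = set_encode {t. t < length qs \<and> bit i (qs!t)}"
proof -
  have "{t. t < length qs \<and> bit i (qs!t)} = {t \<in> {..<length qs}. bit i (qs!t)}" by auto
  moreover have "sum ((^) (2::nat)) {t \<in> {..<length qs}. bit i (qs!t)} = (\<Sum>t<length qs. if bit i (qs!t) then 2^t else 0)"
    by (rule sum.inter_filter) simp
  ultimately show ?thesis unfolding sub_idx_def set_encode_def by simp
qed

lemma bit_sub_idx: "bit (sub_idx qs i) t \<longleftrightarrow> t < length qs \<and> bit i (qs!t)"
proof -
  have fin: "finite {t. t < length qs \<and> bit i (qs!t)}" by simp
  have "bit (sub_idx qs i) t \<longleftrightarrow> t \<in> set_decode (sub_idx qs i)" by (rule bit_decode)
  also have "\<dots> \<longleftrightarrow> t < length qs \<and> bit i (qs!t)" unfolding sub_idx_encode set_encode_inverse[OF fin] by simp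
  finally show ?thesis .
qed

lemma sum_pow2: "(\<Sum>t<k. (2::nat)^t) = 2^k - 1"
  by (induction k) auto

lemma sub_idx_lt: "sub_idx qs i < 2 ^ length qs"
proof -
  have "sub_idx qs i \<le> (\<Sum>t<length qs. (2::nat)^t)"
    unfolding sub_idx_def by (intro sum_mono) auto
  also have "\<dots> < 2 ^ length qs" by (simp add: sum_pow2)
  finally show ?thesis .
qed

lemma decode_lt: assumes "(i::nat) < 2^N" shows "set_decode i \<subseteq> {..<N}"
proof
  fix x assume "x \<in> set_decode i"
  hence "odd (i div 2^x)" by (simp add: set_decode_def)
  hence "i div 2^x \<noteq> 0" using odd_pos by fastforce
  hence "2^x \<le> i" by (simp add: div_greater_zero_iff)
  hence "(2::nat)^x < 2^N" using assms by linarith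
  thus "x \<in> {..<N}" using power_less_imp_less_exp[of "2::nat" x N] by simp
qed

lemma decode_inj: "set_decode i = set_decode j \<Longrightarrow> i = j"
  by (metis set_decode_inverse)

lemma agree_sym: "agree_off N qs i j \<longleftrightarrow> agree_off N qs j i"
  unfolding agree_off_def by auto

lemma agree_iff:
  assumes "i < 2^N" "j < 2^N"
  shows "agree_off N qs i j \<longleftrightarrow> set_decode i - set qs = set_decode j - set qs"
proof -
  have "agree_off N qs i j \<longleftrightarrow> (\<forall>k<N. k \<notin> set qs \<longrightarrow> (k \<in> set_decode i \<longleftrightarrow> k \<in> set_decode j))"
    unfolding agree_off_def bit_decode by simp
  also have "\<dots> \<longleftrightarrow> set_decode i - set qs = set_decode j - set qs"
    using decode_lt[OF assms(1)] decode_lt[OF assms(2)] by blast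
  finally show ?thesis .
qed

definition gq :: "nat list \<Rightarrow> nat \<Rightarrow> nat \<times> nat set" where
  "gq qs i = (sub_idx qs i, set_decode i - set qs)"

lemma gq_inj:
  assumes "gq qs i = gq qs j"
  shows "i = j"
proof -
  have s: "sub_idx qs i = sub_idx qs j" and r: "set_decode i - set qs = set_decode j - set qs"
    using assms by (auto simp: gq_def)
  have "set_decode i = set_decode j"
  proof (intro set_eqI)
    fix x show "x \<in> set_decode i \<longleftrightarrow> x \<in> set_decode j"
    proof (cases "x \<in> set qs")
      case True
      then obtain t where t: "t < length qs" "x = qs!t" by (auto simp: in_set_conv_nth)
      have "x \<in> set_decode i \<longleftrightarrow> bit (sub_idx qs i) t" using t by (simp add: bit_decode[symmetric] bit_sub_idx)
      also have "\<dots> \<longleftrightarrow> x \<in> set_decode j" using t s by (simp add: bit_decode[symmetric] bit_sub_idx)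
      finally show ?thesis .
    next
      case False thus ?thesis using r by blast
    qed
  qed
  thus ?thesis by (rule decode_inj)
qed

lemma gq_bij:
  assumes d: "distinct qs" and q: "set qs \<subseteq> {..<N}"
  shows "bij_betw (gq qs) {..<2^N} ({..<2^length qs} \<times> Pow ({..<N} - set qs))"
  unfolding bij_betw_def
proof
  show inj: "inj_on (gq qs) {..<2^N}" by (auto intro: inj_onI gq_inj)
  have sub: "gq qs ` {..<2^N} \<subseteq> {..<2^length qs} \<times> Pow ({..<N} - set qs)"
  proof
    fix z assume "z \<in> gq qs ` {..<2^N}"
    then obtain i where i: "i < 2^N" "z = gq qs i" by auto
    thus "z \<in> {..<2^length qs} \<times> Pow ({..<N} - set qs)"
      using sub_idx_lt[of qs i] decode_lt[OF i(1)] by (auto simp: gq_def)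
  qed
  have k: "length qs \<le> N" using card_mono[OF _ q] distinct_card[OF d] by simp
  have "card ({..<(2::nat)^length qs} \<times> Pow ({..<N} - set qs)) = 2^length qs * 2^(N - length qs)"
    using card_Diff_subset[OF _ q] distinct_card[OF d] by (simp add: card_cartesian_product card_Pow)
  also have "\<dots> = 2^N" using k by (simp add: power_add[symmetric])
  also have "\<dots> = card (gq qs ` {..<2^N})" using card_image[OF inj] by simp
  finally show "gq qs ` {..<2^N} = {..<2^length qs} \<times> Pow ({..<N} - set qs)"
    using card_subset_eq[OF _ sub] by simp
qed

definition gi :: "nat \<Rightarrow> nat list \<Rightarrow> nat \<times> nat set \<Rightarrow> nat" where
  "gi N qs = inv_into {..<2^N} (gq qs)"

lemma gi_bij:
  assumes "distinct qs" "set qs \<subseteq> {..<N}"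
  shows "bij_betw (gi N qs) ({..<2^length qs} \<times> Pow ({..<N} - set qs)) {..<2^N}"
  unfolding gi_def by (rule bij_betw_inv_into[OF gq_bij[OF assms]])

lemma gq_gi:
  assumes "distinct qs" "set qs \<subseteq> {..<N}" "z \<in> {..<2^length qs} \<times> Pow ({..<N} - set qs)"
  shows "gq qs (gi N qs z) = z"
  unfolding gi_def by (rule bij_betw_inv_into_right[OF gq_bij[OF assms(1,2)] assms(3)])

lemma gq_mem:
  assumes "distinct qs" "set qs \<subseteq> {..<N}" "a < 2^N"
  shows "gq qs a \<in> {..<2^length qs} \<times> Pow ({..<N} - set qs)"
  using gq_bij[OF assms(1,2)] assms(3) unfolding bij_betw_def by auto

lemma sum_agree:
  assumes d: "distinct qs" and q: "set qs \<subseteq> {..<N}" and a: "a < 2^N"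
  shows "(\<Sum>i<2^N. if agree_off N qs i a then f (sub_idx qs i) i else 0)
       = (\<Sum>u<2^length qs. f u (gi N qs (u, snd (gq qs a))))"
proof -
  let ?S = "{..<(2::nat)^length qs}" and ?P = "Pow ({..<N} - set qs)"
  have gib: "bij_betw (gi N qs) (?S \<times> ?P) {..<2^N}" by (rule gi_bij[OF d q])
  have "(\<Sum>i<2^N. if agree_off N qs i a then f (sub_idx qs i) i else 0)
      = (\<Sum>z\<in>?S \<times> ?P. if agree_off N qs (gi N qs z) a then f (sub_idx qs (gi N qs z)) (gi N qs z) else 0)"
    by (rule sum.reindex_bij_betw[OF gib, symmetric])
  also have "\<dots> = (\<Sum>z\<in>?S \<times> ?P. if snd z = snd (gq qs a) then f (fst z) (gi N qs z) else 0)"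
  proof (rule sum.cong[OF refl])
    fix z assume z: "z \<in> ?S \<times> ?P"
    have lt: "gi N qs z < 2^N" using gib z unfolding bij_betw_def by auto
    have e: "gq qs (gi N qs z) = z" by (rule gq_gi[OF d q z])
    have "agree_off N qs (gi N qs z) a \<longleftrightarrow> snd z = snd (gq qs a)"
      using agree_iff[OF lt a, of qs] e unfolding gq_def by (metis snd_conv)
    moreover have "sub_idx qs (gi N qs z) = fst z" using e unfolding gq_def by (metis fst_conv)
    ultimately show "(if agree_off N qs (gi N qs z) a then f (sub_idx qs (gi N qs z)) (gi N qs z) else 0)
        = (if snd z = snd (gq qs a) then f (fst z) (gi N qs z) else 0)" by simp
  qed
  also have "\<dots> = (\<Sum>u\<in>?S. \<Sum>R\<in>?P. if R = snd (gq qs a) then f u (gi N qs (u, R)) else 0)"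
    by (simp only: sum.cartesian_product split_def prod.collapse fst_conv snd_conv)
  also have "\<dots> = (\<Sum>u\<in>?S. f u (gi N qs (u, snd (gq qs a))))"
    using gq_mem[OF d q a] by (intro sum.cong refl) auto
  finally show ?thesis .
qed

lemma lift_alt: "lift N qs E X = (\<lambda>a b. if a < 2^N \<and> b < 2^N then
    (\<Sum>i<2^N. \<Sum>j<2^N. X i j * (if agree_off N qs i a \<and> agree_off N qs j b
        then E (unitm (sub_idx qs i) (sub_idx qs j)) (sub_idx qs a) (sub_idx qs b) else 0)) else 0)"
  unfolding lift_def by (intro ext) (simp add: if_distrib[where f="\<lambda>x. _ * x"] cong: if_cong)

lemma lin_lift: "lin (lift N qs E)"
  unfolding lin_def lift_alt by (intro allI ext) (simp add: algebra_simps sum.distrib sum_distrib_left)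

lemma matp_lift: "matp (2^N) (lift N qs E)"
  unfolding matp_def is_mat_def lift_def by auto

lemma sum2_delta:
  fixes W :: "nat \<Rightarrow> nat \<Rightarrow> complex"
  assumes "i < n" "j < n"
  shows "(\<Sum>i'<n. \<Sum>j'<n. unitm i j i' j' * W i' j') = W i j"
proof -
  have "(\<Sum>i'<n. \<Sum>j'<n. unitm i j i' j' * W i' j') = (\<Sum>i'<n. if i' = i then W i j else 0)"
  proof (rule sum.cong[OF refl])
    fix i' assume "i' \<in> {..<n}"
    have "(\<Sum>j'<n. unitm i j i' j' * W i' j') = (\<Sum>j'<n. if j' = j then (if i' = i then W i j else 0) else 0)"
      by (intro sum.cong refl) (auto simp: unitm_def)
    also have "\<dots> = (if i' = i then W i j else 0)" using assms by simp
    finally show "(\<Sum>j'<n. unitm i j i' j' * W i' j') = (if i' = i then W i j else 0)" .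
  qed
  also have "\<dots> = W i j" using assms by simp
  finally show ?thesis .
qed

lemma lift_unit:
  assumes "i < 2^N" "j < 2^N"
  shows "lift N qs E (unitm i j) a b = (if a < 2^N \<and> b < 2^N \<and> agree_off N qs i a \<and> agree_off N qs j b
     then E (unitm (sub_idx qs i) (sub_idx qs j)) (sub_idx qs a) (sub_idx qs b) else 0)"
  unfolding lift_alt using sum2_delta[OF assms, of "\<lambda>i j. if agree_off N qs i a \<and> agree_off N qs j b
        then E (unitm (sub_idx qs i) (sub_idx qs j)) (sub_idx qs a) (sub_idx qs b) else 0"] by auto

lemma gcp_lift:
  assumes d: "distinct qs" and q: "set qs \<subseteq> {..<N}" and g: "gcp (2^length qs) E"
  shows "gcp (2^N) (lift N qs E)"
  unfolding gcp_def
proof (intro allI impI)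
  fix J :: "nat set" and X :: "nat \<times> nat \<Rightarrow> nat \<times> nat \<Rightarrow> complex"
  assume J: "finite J" and X: "psdS ({..<2^N} \<times> J) X"
  let ?S = "{..<(2::nat)^length qs}" and ?P = "Pow ({..<N} - set qs)"
  let ?A = "?S \<times> (?P \<times> J)"
  define h :: "nat \<times> (nat set \<times> nat) \<Rightarrow> nat \<times> nat" where "h = (\<lambda>x. (gi N qs (fst x, fst (snd x)), snd (snd x)))"
  define h' :: "nat \<times> nat \<Rightarrow> nat \<times> (nat set \<times> nat)" where "h' = (\<lambda>x. (fst (gq qs (fst x)), (snd (gq qs (fst x)), snd x)))"
  have gib: "bij_betw (gi N qs) (?S \<times> ?P) {..<2^N}" by (rule gi_bij[OF d q])
  have gigq: "\<And>a. a < 2^N \<Longrightarrow> gi N qs (gq qs a) = a"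
    unfolding gi_def using bij_betw_inv_into_left[OF gq_bij[OF d q]] by simp
  have hb: "bij_betw h ?A ({..<2^N} \<times> J)"
  proof (rule bij_betw_byWitness[where f'=h'])
    show "\<forall>a\<in>?A. h' (h a) = a" unfolding h_def h'_def using gq_gi[OF d q] by auto
    show "\<forall>a'\<in>{..<2 ^ N} \<times> J. h (h' a') = a'" unfolding h_def h'_def using gigq by auto
    show "h ` ?A \<subseteq> {..<2 ^ N} \<times> J" unfolding h_def using gib unfolding bij_betw_def by auto
    show "h' ` ({..<2 ^ N} \<times> J) \<subseteq> ?A" 
    proof (rule image_subsetI)
      fix z :: "nat \<times> nat" assume "z \<in> {..<2^N} \<times> J"
      hence "gq qs (fst z) \<in> ?S \<times> ?P" "snd z \<in> J" using gq_mem[OF d q] by auto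
      thus "h' z \<in> ?A" unfolding h'_def mem_Times_iff by simp
    qed
  qed
  have h'b: "bij_betw h' ({..<2^N} \<times> J) ?A"
  proof (rule bij_betw_byWitness[where f'=h])
    show "\<forall>a\<in>{..<2 ^ N} \<times> J. h (h' a) = a" unfolding h_def h'_def using gigq by auto
    show "\<forall>a'\<in>?A. h' (h a') = a'" unfolding h_def h'_def using gq_gi[OF d q] by auto
    show "h' ` ({..<2 ^ N} \<times> J) \<subseteq> ?A" 
    proof (rule image_subsetI)
      fix z :: "nat \<times> nat" assume "z \<in> {..<2^N} \<times> J"
      hence "gq qs (fst z) \<in> ?S \<times> ?P" "snd z \<in> J" using gq_mem[OF d q] by auto
      thus "h' z \<in> ?A" unfolding h'_def mem_Times_iff by simp
    qed
    show "h ` ?A \<subseteq> {..<2 ^ N} \<times> J" unfolding h_def using gib unfolding bij_betw_def by auto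
  qed
  define Y where "Y = (\<lambda>x y. X (h x) (h y))"
  have YP: "psdS ?A Y" by (rule psdS_reindex[OF hb X]) (simp add: Y_def)
  have Z: "psdS ?A (amplJ (2^length qs) E Y)" by (rule gcp_any[OF g _ YP]) (use J in simp)
  show "psdS ({..<2^N} \<times> J) (amplJ (2^N) (lift N qs E) X)"
  proof (rule psdS_reindex[OF h'b Z])
    fix x y :: "nat \<times> nat" assume x: "x \<in> {..<2^N} \<times> J" and y: "y \<in> {..<2^N} \<times> J"
    obtain a ja b jb where xy: "x = (a, ja)" "y = (b, jb)" by (cases x, cases y) auto
    have a: "a < 2^N" and b: "b < 2^N" using x y xy by auto
    let ?Ra = "snd (gq qs a)" and ?Rb = "snd (gq qs b)"
    have "amplJ (2^N) (lift N qs E) X x y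
       = (\<Sum>i<2^N. if agree_off N qs i a then (\<Sum>j<2^N. if agree_off N qs j b then
            X (i, ja) (j, jb) * E (unitm (sub_idx qs i) (sub_idx qs j)) (sub_idx qs a) (sub_idx qs b) else 0) else 0)"
      unfolding amplJ_def xy using a b by (intro sum.cong refl) (auto simp: lift_unit intro!: sum.cong)
    also have "\<dots> = (\<Sum>i<2^N. if agree_off N qs i a then (\<Sum>w<2^length qs.
            X (i, ja) (gi N qs (w, ?Rb), jb) * E (unitm (sub_idx qs i) w) (sub_idx qs a) (sub_idx qs b)) else 0)"
      by (intro sum.cong refl if_cong sum_agree[OF d q b])
    also have "\<dots> = (\<Sum>u<2^length qs. \<Sum>w<2^length qs.
            X (gi N qs (u, ?Ra), ja) (gi N qs (w, ?Rb), jb) * E (unitm u w) (sub_idx qs a) (sub_idx qs b))"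
      by (rule sum_agree[OF d q a])
    also have "\<dots> = amplJ (2^length qs) E Y (h' x) (h' y)"
      unfolding amplJ_def Y_def h_def h'_def xy gq_def by simp
    finally show "amplJ (2^N) (lift N qs E) X x y = amplJ (2^length qs) E Y (h' x) (h' y)" .
  qed
qed



lemma agree_trans: "agree_off N qs i j \<Longrightarrow> agree_off N qs j k \<Longrightarrow> agree_off N qs i k"
  unfolding agree_off_def by auto

lemma agree_gq:
  assumes "i < 2^N" "j < 2^N"
  shows "agree_off N qs i j \<longleftrightarrow> snd (gq qs i) = snd (gq qs j)"
  using agree_iff[OF assms] by (simp add: gq_def)

lemma tr_lift_unit:
  assumes d: "distinct qs" and q: "set qs \<subseteq> {..<N}" and tp: "trace_preserving (2^length qs) E"
    and k: "k < 2^N" and l: "l < 2^N"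
  shows "(\<Sum>a<2^N. lift N qs E (unitm k l) a a) = (if k = l then 1 else 0)"
proof (cases "agree_off N qs k l")
  case True
  have "(\<Sum>a<2^N. lift N qs E (unitm k l) a a)
      = (\<Sum>a<2^N. if agree_off N qs a k then (\<lambda>u a. E (unitm (sub_idx qs k) (sub_idx qs l)) u u) (sub_idx qs a) a else 0)"
    using True by (intro sum.cong refl) (auto simp: lift_unit[OF k l] agree_sym intro: agree_trans)
  also have "\<dots> = (\<Sum>u<2^length qs. E (unitm (sub_idx qs k) (sub_idx qs l)) u u)"
    by (rule sum_agree[OF d q k])
  also have "\<dots> = mtrace (2^length qs) (unitm (sub_idx qs k) (sub_idx qs l))"
    using tp unitm_mat[OF sub_idx_lt sub_idx_lt] unfolding trace_preserving_def mtrace_def by metis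
  also have "\<dots> = (if sub_idx qs k = sub_idx qs l then 1 else 0)"
    unfolding mtrace_def unitm_def using sub_idx_lt[of qs k]
    by (cases "sub_idx qs k = sub_idx qs l") (auto intro!: sum.neutral)
  also have "\<dots> = (if k = l then 1 else 0)"
  proof -
    have "sub_idx qs k = sub_idx qs l \<longleftrightarrow> k = l"
      using gq_inj[of qs k l] True agree_gq[OF k l] by (auto simp: gq_def prod_eq_iff)
    thus ?thesis by simp
  qed
  finally show ?thesis .
next
  case False
  have "(\<Sum>a<2^N. lift N qs E (unitm k l) a a) = (\<Sum>a<(2::nat)^N. 0)"
  proof (intro sum.cong refl)
    fix a assume "a \<in> {..<(2::nat)^N}"
    have "\<not> (agree_off N qs k a \<and> agree_off N qs l a)"
      using False agree_trans agree_sym by metis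
    thus "lift N qs E (unitm k l) a a = 0" by (auto simp: lift_unit[OF k l])
  qed
  moreover have "k \<noteq> l" using False unfolding agree_off_def by auto
  ultimately show ?thesis by simp
qed

lemma tp_lift:
  assumes d: "distinct qs" and q: "set qs \<subseteq> {..<N}" and tp: "trace_preserving (2^length qs) E"
  shows "trace_preserving (2^N) (lift N qs E)"
  unfolding trace_preserving_def
proof (intro allI impI)
  fix A assume A: "is_mat (2^N) A"
  have "mtrace (2^N) (lift N qs E A) = (\<Sum>a<2^N. \<Sum>k<2^N. \<Sum>l<2^N. A k l * lift N qs E (unitm k l) a a)"
    unfolding mtrace_def lin_expand[OF lin_lift A] ..
  also have "\<dots> = (\<Sum>k<2^N. \<Sum>l<2^N. A k l * (\<Sum>a<2^N. lift N qs E (unitm k l) a a))"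
  proof -
    have "(\<Sum>a<2^N. \<Sum>k<2^N. \<Sum>l<2^N. A k l * lift N qs E (unitm k l) a a)
        = (\<Sum>k<2^N. \<Sum>a<2^N. \<Sum>l<2^N. A k l * lift N qs E (unitm k l) a a)" by (rule sum.swap)
    also have "\<dots> = (\<Sum>k<2^N. \<Sum>l<2^N. \<Sum>a<2^N. A k l * lift N qs E (unitm k l) a a)"
      by (rule sum.cong[OF refl], rule sum.swap)
    finally show ?thesis by (simp add: sum_distrib_left)
  qed
  also have "\<dots> = (\<Sum>k<2^N. \<Sum>l<2^N. A k l * (if k = l then 1 else 0))"
    by (intro sum.cong refl) (simp add: tr_lift_unit[OF d q tp])
  also have "\<dots> = mtrace (2^N) A" unfolding mtrace_def by (simp add: if_distrib[where f="\<lambda>x. _ * x"] cong: if_cong)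
  finally show "mtrace (2^N) (lift N qs E A) = mtrace (2^N) A" .
qed

lemma lift_madd2: "lift N qs (madd2 E1 E2) = madd2 (lift N qs E1) (lift N qs E2)"
proof (intro ext)
  fix X a b
  have e: "\<And>P (x::complex) y z. (if P then x * (y + z) else 0) = (if P then x * y else 0) + (if P then x * z else 0)"
    by (simp add: distrib_left)
  show "lift N qs (madd2 E1 E2) X a b = madd2 (lift N qs E1) (lift N qs E2) X a b"
    unfolding lift_def madd2_def madd_def by (simp add: e sum.distrib)
qed

lemma sandwich_emb:
  "sandwich N (emb N qs A) = lift N qs (sw (2^length qs) A)"
proof (intro ext)
  fix X a b
  let ?n = "(2::nat)^N" and ?d = "(2::nat)^length qs"
  show "sandwich N (emb N qs A) X a b = lift N qs (sw ?d A) X a b"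
  proof (cases "a < ?n \<and> b < ?n")
    case False thus ?thesis unfolding sandwich_def lift_def mmul_def by auto
  next
    case True
    have "sandwich N (emb N qs A) X a b = (\<Sum>l<?n. \<Sum>k<?n. emb N qs A a k * X k l * cnj (emb N qs A b l))"
      unfolding sandwich_def mmul_def[of ?n "mmul ?n (emb N qs A) X"] using True
      by (simp add: mmul_def adj_def sum_distrib_right)
    also have "\<dots> = (\<Sum>k<?n. \<Sum>l<?n. emb N qs A a k * X k l * cnj (emb N qs A b l))"
      by (rule sum.swap)
    also have "\<dots> = (\<Sum>i<?n. \<Sum>j<?n. if agree_off N qs i a \<and> agree_off N qs j b
            then X i j * sw ?d A (unitm (sub_idx qs i) (sub_idx qs j)) (sub_idx qs a) (sub_idx qs b) else 0)"
    proof (intro sum.cong refl)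
      fix k l assume k: "k \<in> {..<?n}" and l: "l \<in> {..<?n}"
      show "emb N qs A a k * X k l * cnj (emb N qs A b l) = (if agree_off N qs k a \<and> agree_off N qs l b
            then X k l * sw ?d A (unitm (sub_idx qs k) (sub_idx qs l)) (sub_idx qs a) (sub_idx qs b) else 0)"
        using k l True sub_idx_lt[of qs]
        by (auto simp: emb_def sw_unit agree_sym)
    qed
    also have "\<dots> = lift N qs (sw ?d A) X a b" unfolding lift_def using True by simp
    finally show ?thesis .
  qed
qed

lemma tp_sw_unitary:
  assumes u: "unitary d U"
  shows "trace_preserving d (sw d U)"
  unfolding trace_preserving_def
proof (intro allI impI)
  fix X assume X: "is_mat d X"
  have id: "\<And>l k. l < d \<Longrightarrow> k < d \<Longrightarrow> (\<Sum>a<d. cnj (U a l) * U a k) = (if l = k then 1 else 0)"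
  proof -
    fix l k assume "l < d" "k < d"
    have "mmul d (adj U) U l k = idm d l k" using u unfolding unitary_def by simp
    thus "(\<Sum>a<d. cnj (U a l) * U a k) = (if l = k then 1 else 0)"
      using \<open>l < d\<close> \<open>k < d\<close> unfolding mmul_def adj_def idm_def by simp
  qed
  have "mtrace d (sw d U X) = (\<Sum>a<d. \<Sum>l<d. \<Sum>k<d. U a k * X k l * cnj (U a l))"
    unfolding mtrace_def sw_def mmul_def[of d "mmul d U X"] by (simp add: mmul_def adj_def sum_distrib_right)
  also have "\<dots> = (\<Sum>k<d. \<Sum>l<d. \<Sum>a<d. U a k * X k l * cnj (U a l))"
  proof -
    have "(\<Sum>a<d. \<Sum>l<d. \<Sum>k<d. U a k * X k l * cnj (U a l)) = (\<Sum>a<d. \<Sum>k<d. \<Sum>l<d. U a k * X k l * cnj (U a l))"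
      by (rule sum.cong[OF refl], rule sum.swap)
    also have "\<dots> = (\<Sum>k<d. \<Sum>a<d. \<Sum>l<d. U a k * X k l * cnj (U a l))" by (rule sum.swap)
    also have "\<dots> = (\<Sum>k<d. \<Sum>l<d. \<Sum>a<d. U a k * X k l * cnj (U a l))"
      by (rule sum.cong[OF refl], rule sum.swap)
    finally show ?thesis .
  qed
  also have "\<dots> = (\<Sum>k<d. \<Sum>l<d. X k l * (\<Sum>a<d. cnj (U a l) * U a k))"
    by (simp add: sum_distrib_left mult_ac)
  also have "\<dots> = (\<Sum>k<d. \<Sum>l<d. X k l * (if l = k then 1 else 0))"
    by (intro sum.cong refl) (simp add: id)
  also have "\<dots> = mtrace d X" unfolding mtrace_def by (simp add: if_distrib[where f="\<lambda>x. _ * x"] cong: if_cong)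
  finally show "mtrace d (sw d U X) = mtrace d X" .
qed

lemma two_sum: "(\<Sum>i<(2::nat). f i) = f 0 + f 1"
  by (simp add: numeral_2_eq_2)

lemma tp_init_small: "trace_preserving 2 (madd2 (sw 2 (unitm 0 0)) (sw 2 (unitm 0 1)))"
  unfolding trace_preserving_def mtrace_def madd2_def madd_def sw_def mmul_def adj_def unitm_def
  by (simp add: two_sum)

lemma tp_meas_small: "trace_preserving 2 (madd2 (sw 2 (unitm 0 0)) (sw 2 (unitm 1 1)))"
  unfolding trace_preserving_def mtrace_def madd2_def madd_def sw_def mmul_def adj_def unitm_def
  by (simp add: two_sum)



definition good :: "nat \<Rightarrow> (cmat \<Rightarrow> cmat) \<Rightarrow> bool" where
  "good n F \<longleftrightarrow> gcp n F \<and> lin F \<and> matp n F"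

lemma lin_id: "lin id" unfolding lin_def by simp
lemma matp_id: "matp n id" unfolding matp_def by simp
lemma good_id: "good n id" unfolding good_def using gcp_id lin_id matp_id by blast

lemma lin_compose: "lin F \<Longrightarrow> lin G \<Longrightarrow> lin (F \<circ> G)" unfolding lin_def by simp
lemma matp_compose: "matp n F \<Longrightarrow> matp n G \<Longrightarrow> matp n (F \<circ> G)" unfolding matp_def by simp

lemma good_comp: "good n F \<Longrightarrow> good n G \<Longrightarrow> good n (F \<circ> G)"
  unfolding good_def using gcp_comp lin_compose matp_compose by blast

lemma good_lift:
  assumes "distinct qs" "set qs \<subseteq> {..<N}" "gcp (2^length qs) E"
  shows "good (2^N) (lift N qs E)"
  unfolding good_def using gcp_lift[OF assms] lin_lift matp_lift by blast

lemma mtrace_madd: "mtrace n (madd A B) = mtrace n A + mtrace n B"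
  unfolding mtrace_def madd_def by (simp add: sum.distrib)

lemma ket_bra_sw: "sandwich N (ket_bra N q i j) = lift N [q] (sw 2 (unitm i j))"
  unfolding ket_bra_def using sandwich_emb[of N "[q]" "unitm i j"] by simp

lemma init_lift: "init_map N q = lift N [q] (madd2 (sw 2 (unitm 0 0)) (sw 2 (unitm 0 1)))"
proof -
  have "init_map N q = madd2 (sandwich N (ket_bra N q 0 0)) (sandwich N (ket_bra N q 0 1))"
    unfolding init_map_def madd2_def by (rule ext) simp
  thus ?thesis by (simp add: ket_bra_sw lift_madd2)
qed

lemma meas_lift: "meas_map N q c = lift N [q] (sw 2 (unitm c c))"
proof -
  have "meas_map N q c = sandwich N (ket_bra N q c c)"
    unfolding meas_map_def by (rule ext) simp
  thus ?thesis by (simp add: ket_bra_sw)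
qed

lemma meas_sum: "madd2 (meas_map N q 0) (meas_map N q 1) = lift N [q] (madd2 (sw 2 (unitm 0 0)) (sw 2 (unitm 1 1)))"
  by (simp add: meas_lift lift_madd2)

fun okp :: "nat \<Rightarrow> ('x, 'v) prog \<Rightarrow> bool" where
  "okp N Skip = True"
| "okp N (Seq S1 S2) = (okp N S1 \<and> okp N S2)"
| "okp N (Init q) = (q < N)"
| "okp N (Unit U qs) = (distinct qs \<and> (\<forall>q\<in>set qs. q < N) \<and> unitary (2 ^ length qs) U)"
| "okp N (Meas x q) = (q < N)"
| "okp N (Assign x e) = True"
| "okp N (If b S1 S2) = (okp N S1 \<and> okp N S2)"
| "okp N (Fn y f x) = True"
| "okp N (Repeat S b) = okp N S"

lemma wf_okp: "wf_prog N S \<Longrightarrow> okp N S"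
  by (induction S) auto

lemma okp_seq: "okp N S1 \<Longrightarrow> okp N S2 \<Longrightarrow> okp N (seq S1 S2)"
  unfolding seq_def by auto

lemma gcp_local:
  assumes "completely_positive (2 ^ length qs) E'"
  shows "gcp (2 ^ length qs) E'"
  by (rule cp_imp_gcp[OF assms]) simp

lemma good_sw: "good d (sw d K)"
  unfolding good_def using gcp_sw lin_sw matp_sw by blast

lemma step_good:
  assumes "step N S \<sigma> fl F S' \<sigma>'" "okp N S"
  shows "good (2^N) F \<and> trace_preserving (2^N) F \<and> okp N S'"
  using assms
proof (induction rule: step.induct)
  case (IN q \<sigma>)
  have q: "set [q] \<subseteq> {..<N}" using IN by simp
  have g: "gcp (2^length [q]) (madd2 (sw 2 (unitm 0 0)) (sw 2 (unitm 0 1)))"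
    using gcp_add[OF gcp_sw gcp_sw] by simp
  show ?case unfolding init_lift
    using good_lift[OF _ q g] tp_lift[OF _ q, of "madd2 (sw 2 (unitm 0 0)) (sw 2 (unitm 0 1))"] tp_init_small by simp
next
  case (UT U qs \<sigma>)
  have d: "distinct qs" and q: "set qs \<subseteq> {..<N}" and u: "unitary (2^length qs) U" using UT by auto
  show ?case unfolding sandwich_emb
    using good_lift[OF d q gcp_sw] tp_lift[OF d q tp_sw_unitary[OF u]] by simp
next
  case (AS x e \<sigma>) thus ?case by (intro conjI good_id) (auto simp: trace_preserving_def)
next
  case (CO y f x \<sigma>) thus ?case by (intro conjI good_id) (auto simp: trace_preserving_def)
next
  case (CT b \<sigma> S1 S2) thus ?case by (intro conjI good_id) (auto simp: trace_preserving_def)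
next
  case (CF b \<sigma> S1 S2) thus ?case by (intro conjI good_id) (auto simp: trace_preserving_def)
next
  case (RU S b \<sigma>) thus ?case by (intro conjI good_id) (auto simp: trace_preserving_def)
next
  case (F_IN q E \<sigma>)
  obtain E' where E': "completely_positive (2 ^ length [q]) E'" "trace_preserving (2 ^ length [q]) E'" "E = lift N [q] E'"
    using F_IN unfolding local_cptp_def by blast
  have q: "set [q] \<subseteq> {..<N}" using F_IN by simp
  show ?case using good_lift[OF _ q gcp_local[OF E'(1)]] tp_lift[OF _ q E'(2)] E'(3) by simp
next
  case (F_UT qs E U \<sigma>)
  obtain E' where E': "completely_positive (2 ^ length qs) E'" "trace_preserving (2 ^ length qs) E'" "E = lift N qs E'"
    using F_UT unfolding local_cptp_def by blast
  have d: "distinct qs" and q: "set qs \<subseteq> {..<N}" using F_UT by auto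
  show ?case using good_lift[OF d q gcp_local[OF E'(1)]] tp_lift[OF d q E'(2)] E'(3) by simp
next
  case (SC S1 \<sigma> fl F S1' \<sigma>' S2)
  thus ?case using okp_seq by auto
qed

lemma mstep_good:
  assumes "mstep N S \<sigma> fl F0 S0' \<sigma>0 F1 S1' \<sigma>1" "okp N S"
  shows "good (2^N) F0 \<and> good (2^N) F1 \<and> okp N S0' \<and> okp N S1' \<and>
         (\<forall>A. is_mat (2^N) A \<longrightarrow> mtrace (2^N) (F0 A) + mtrace (2^N) (F1 A) = mtrace (2^N) A)"
  using assms
proof (induction rule: mstep.induct)
  case (M x q \<sigma>)
  have q: "set [q] \<subseteq> {..<N}" using M by simp
  have tp: "trace_preserving (2^N) (madd2 (meas_map N q 0) (meas_map N q 1))"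
    unfolding meas_sum using tp_lift[OF _ q, of "madd2 (sw 2 (unitm 0 0)) (sw 2 (unitm 1 1))"] tp_meas_small by simp
  have "\<forall>A. is_mat (2^N) A \<longrightarrow> mtrace (2^N) (meas_map N q 0 A) + mtrace (2^N) (meas_map N q 1 A) = mtrace (2^N) A"
    using tp unfolding trace_preserving_def madd2_def mtrace_madd by simp
  moreover have "good (2^N) (meas_map N q c)" for c
    unfolding meas_lift using good_lift[OF _ q, of "sw 2 (unitm c c)"] gcp_sw by simp
  ultimately show ?case by simp
next
  case (F_M q E0 E1 x \<sigma>)
  have q: "set [q] \<subseteq> {..<N}" using F_M by simp
  have "good (2^N) E" if lc: "local_cp N [q] E" for E
  proof -
    obtain E' where E': "completely_positive (2 ^ length [q]) E'" "E = lift N [q] E'"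
      using lc unfolding local_cp_def by blast
    show ?thesis using good_lift[OF _ q gcp_local[OF E'(1)]] E'(2) by simp
  qed
  thus ?case using F_M unfolding trace_preserving_def madd2_def mtrace_madd by simp
next
  case (SC S1 \<sigma> fl F0 S0' \<sigma>0 F1 S1' \<sigma>1 S2)
  thus ?case using okp_seq by auto
qed



lemma ft_root: "fault_tree N r S0 \<sigma>0 T \<Longrightarrow> T [] = Some (S0, \<sigma>0, id, False)"
  unfolding fault_tree_def by blast

lemma ft_parent: "fault_tree N r S0 \<sigma>0 T \<Longrightarrow> T (p @ [c]) \<noteq> None \<Longrightarrow> T p \<noteq> None"
  unfolding fault_tree_def by blast

lemma ft_node:
  assumes "fault_tree N r S0 \<sigma>0 T" "T p = Some (S, \<sigma>, \<Phi>, fl)"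
  shows "(S = Skip \<longrightarrow> T (p @ [False]) = None \<and> T (p @ [True]) = None) \<and>
        (meas_head S \<longrightarrow> (\<exists>f F0 S0' \<sigma>0' F1 S1' \<sigma>1'.
            mstep N S \<sigma> f F0 S0' \<sigma>0' F1 S1' \<sigma>1' \<and>
            T (p @ [False]) = Some (S0', \<sigma>0', F0 \<circ> \<Phi>, f) \<and>
            T (p @ [True]) = Some (S1', \<sigma>1', F1 \<circ> \<Phi>, f))) \<and>
        (S \<noteq> Skip \<and> \<not> meas_head S \<longrightarrow> (\<exists>f F S' \<sigma>'.
            step N S \<sigma> f F S' \<sigma>' \<and>
            T (p @ [False]) = Some (S', \<sigma>', F \<circ> \<Phi>, f) \<and> T (p @ [True]) = None))"
  using assms unfolding fault_tree_def by blast

lemma good_id': "good n (\<lambda>a. a)" using good_id unfolding id_def .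

lemma node_inv:
  assumes ft: "fault_tree N r S0 \<sigma>0 T" and wf: "wf_prog N S0"
  shows "T p = Some (S, \<sigma>, \<Phi>, fl) \<Longrightarrow> okp N S \<and> good (2^N) \<Phi>"
proof (induction p arbitrary: S \<sigma> \<Phi> fl rule: rev_induct)
  case Nil
  thus ?case using ft_root[OF ft] wf_okp[OF wf] good_id good_id' by auto
next
  case (snoc c p)
  have "T p \<noteq> None" using ft_parent[OF ft, of p c] snoc.prems by simp
  then obtain S1 \<sigma>1 \<Phi>1 fl1 where T1: "T p = Some (S1, \<sigma>1, \<Phi>1, fl1)" by (metis not_None_eq prod_cases4)
  have ih: "okp N S1" "good (2^N) \<Phi>1" using snoc.IH[OF T1] by auto
  note nd = ft_node[OF ft T1]
  show ?case
  proof (cases "S1 = Skip")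
    case True thus ?thesis using nd snoc.prems by (cases c) auto
  next
    case nS: False
    show ?thesis
    proof (cases "meas_head S1")
      case True
      then obtain f F0 S0' \<sigma>0' F1 S1' \<sigma>1' where m: "mstep N S1 \<sigma>1 f F0 S0' \<sigma>0' F1 S1' \<sigma>1'"
        and c0: "T (p @ [False]) = Some (S0', \<sigma>0', F0 \<circ> \<Phi>1, f)"
        and c1: "T (p @ [True]) = Some (S1', \<sigma>1', F1 \<circ> \<Phi>1, f)" using nd by blast
      note g = mstep_good[OF m ih(1)]
      show ?thesis using snoc.prems c0 c1 g good_comp[OF _ ih(2)] by (cases c) auto
    next
      case False
      then obtain f F S' \<sigma>' where m: "step N S1 \<sigma>1 f F S' \<sigma>'"
        and c0: "T (p @ [False]) = Some (S', \<sigma>', F \<circ> \<Phi>1, f)"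
        and c1: "T (p @ [True]) = None" using nd nS by blast
      note g = step_good[OF m ih(1)]
      show ?thesis using snoc.prems c0 c1 g good_comp[OF _ ih(2)] by (cases c) auto
    qed
  qed
qed

lemma ns_some: "T p = Some (S, \<sigma>, \<Phi>, fl) \<Longrightarrow> node_state T p \<rho> = \<Phi> \<rho>"
  unfolding node_state_def by simp

lemma ns_none: "T p = None \<Longrightarrow> node_state T p \<rho> = (\<lambda>_ _. 0)"
  unfolding node_state_def by simp

lemma ns_good:
  assumes ft: "fault_tree N r S0 \<sigma>0 T" and wf: "wf_prog N S0" and "T p \<noteq> None"
  shows "\<exists>\<Phi>. good (2^N) \<Phi> \<and> node_state T p = \<Phi>"
proof -
  obtain S \<sigma> \<Phi> fl where "T p = Some (S, \<sigma>, \<Phi>, fl)" using assms(3) by (metis not_None_eq prod_cases4)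
  thus ?thesis using node_inv[OF ft wf] ns_some[of T p] by blast
qed

lemma ns_mat:
  assumes ft: "fault_tree N r S0 \<sigma>0 T" and wf: "wf_prog N S0" and \<rho>: "is_mat (2^N) \<rho>"
  shows "is_mat (2^N) (node_state T p \<rho>)"
proof (cases "T p = None")
  case True thus ?thesis by (simp add: ns_none is_mat_def)
next
  case False
  then obtain \<Phi> where "good (2^N) \<Phi>" "node_state T p = \<Phi>" using ns_good[OF ft wf] by blast
  thus ?thesis using \<rho> unfolding good_def matp_def by auto
qed

lemma mtrace_zero: "mtrace n (\<lambda>_ _. 0) = 0" unfolding mtrace_def by simp

lemma child_trace:
  assumes ft: "fault_tree N r S0 \<sigma>0 T" and wf: "wf_prog N S0" and \<rho>: "is_mat (2^N) \<rho>"
  shows "mtrace (2^N) (node_state T (p @ [False]) \<rho>) + mtrace (2^N) (node_state T (p @ [True]) \<rho>)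
       = (if p \<in> leaves T then 0 else mtrace (2^N) (node_state T p \<rho>))"
proof (cases "T p")
  case None
  have "T (p @ [c]) = None" for c using ft_parent[OF ft, of p c] None by blast
  hence "T (p @ [False]) = None" "T (p @ [True]) = None" by auto
  thus ?thesis using None by (simp add: ns_none mtrace_zero leaves_def)
next
  case (Some a)
  then obtain S \<sigma> \<Phi> fl where T1: "T p = Some (S, \<sigma>, \<Phi>, fl)" by (metis prod_cases4)
  have ih: "okp N S" "good (2^N) \<Phi>" using node_inv[OF ft wf T1] by auto
  have Pm: "is_mat (2^N) (\<Phi> \<rho>)" using ih(2) \<rho> unfolding good_def matp_def by auto
  note nd = ft_node[OF ft T1]
  show ?thesis
  proof (cases "S = Skip")
    case True thus ?thesis using nd T1 by (simp add: ns_none mtrace_zero leaves_def)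
  next
    case nS: False
    hence nl: "p \<notin> leaves T" using T1 by (simp add: leaves_def)
    show ?thesis
    proof (cases "meas_head S")
      case True
      then obtain f F0 S0' \<sigma>0' F1 S1' \<sigma>1' where m: "mstep N S \<sigma> f F0 S0' \<sigma>0' F1 S1' \<sigma>1'"
        and c0: "T (p @ [False]) = Some (S0', \<sigma>0', F0 \<circ> \<Phi>, f)"
        and c1: "T (p @ [True]) = Some (S1', \<sigma>1', F1 \<circ> \<Phi>, f)" using nd by blast
      have "mtrace (2^N) (F0 (\<Phi> \<rho>)) + mtrace (2^N) (F1 (\<Phi> \<rho>)) = mtrace (2^N) (\<Phi> \<rho>)"
        using mstep_good[OF m ih(1)] Pm by blast
      thus ?thesis using nl c0 c1 T1 by (simp add: node_state_def)
    next
      case False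
      then obtain f F S' \<sigma>' where m: "step N S \<sigma> f F S' \<sigma>'"
        and c0: "T (p @ [False]) = Some (S', \<sigma>', F \<circ> \<Phi>, f)"
        and c1: "T (p @ [True]) = None" using nd nS by blast
      have "mtrace (2^N) (F (\<Phi> \<rho>)) = mtrace (2^N) (\<Phi> \<rho>)"
        using step_good[OF m ih(1)] Pm unfolding trace_preserving_def by blast
      thus ?thesis using nl by (simp add: node_state_def c0 c1 T1 mtrace_zero)
    qed
  qed
qed

lemma fin_len_lt: "finite {p::bool list. length p < n}"
proof -
  have "{p::bool list. length p < n} \<subseteq> {xs. set xs \<subseteq> UNIV \<and> length xs \<le> n}" by auto
  thus ?thesis using finite_lists_length_le[of "UNIV :: bool set" n] finite_subset by auto
qed

lemma fin_len_eq: "finite {p::bool list. length p = n}"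
proof -
  have "{p::bool list. length p = n} \<subseteq> {p. length p < Suc n}" by auto
  thus ?thesis using fin_len_lt finite_subset by blast
qed

lemma sum_len_suc:
  "(\<Sum>p\<in>{p::bool list. length p = Suc n}. f p) = (\<Sum>p\<in>{p. length p = n}. f (p @ [False]) + f (p @ [True]))"
proof -
  have img: "{p::bool list. length p = Suc n} = (\<lambda>z. fst z @ [snd z]) ` ({p. length p = n} \<times> UNIV)"
  proof
    show "{p::bool list. length p = Suc n} \<subseteq> (\<lambda>z. fst z @ [snd z]) ` ({p. length p = n} \<times> UNIV)"
    proof
      fix p :: "bool list" assume "p \<in> {p. length p = Suc n}"
      hence "p \<noteq> []" "length (butlast p) = n" by auto
      hence "p = (\<lambda>z. fst z @ [snd z]) (butlast p, last p)" by simp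
      thus "p \<in> (\<lambda>z. fst z @ [snd z]) ` ({p. length p = n} \<times> UNIV)"
        using \<open>length (butlast p) = n\<close> by blast
    qed
  qed auto
  have inj: "inj_on (\<lambda>z::bool list \<times> bool. fst z @ [snd z]) ({p. length p = n} \<times> UNIV)"
    by (intro inj_onI) (auto simp: prod_eq_iff)
  have "(\<Sum>p\<in>{p::bool list. length p = Suc n}. f p) = (\<Sum>z\<in>{p. length p = n} \<times> UNIV. f (fst z @ [snd z]))"
    unfolding img by (simp add: sum.reindex[OF inj])
  also have "\<dots> = (\<Sum>p\<in>{p. length p = n}. \<Sum>c\<in>UNIV. f (p @ [c]))"
    by (simp only: sum.cartesian_product split_def)
  also have "\<dots> = (\<Sum>p\<in>{p. length p = n}. f (p @ [False]) + f (p @ [True]))"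
    by (simp add: UNIV_bool)
  finally show ?thesis .
qed

lemma level:
  assumes ft: "fault_tree N r S0 \<sigma>0 T" and wf: "wf_prog N S0" and \<rho>: "is_mat (2^N) \<rho>"
  shows "(\<Sum>p\<in>{p. length p = n}. mtrace (2^N) (node_state T p \<rho>))
       + (\<Sum>p\<in>{p. length p < n}. if p \<in> leaves T then mtrace (2^N) (node_state T p \<rho>) else 0) = mtrace (2^N) \<rho>"
proof (induction n)
  case 0
  have "{p::bool list. length p = 0} = {[]}" by auto
  thus ?case using ft_root[OF ft] by (simp add: node_state_def)
next
  case (Suc n)
  let ?t = "\<lambda>p. mtrace (2^N) (node_state T p \<rho>)"
  have e1: "(\<Sum>p\<in>{p. length p = Suc n}. ?t p) = (\<Sum>p\<in>{p. length p = n}. if p \<in> leaves T then 0 else ?t p)"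
    unfolding sum_len_suc using child_trace[OF ft wf \<rho>] by simp
  have U: "{p::bool list. length p < Suc n} = {p. length p < n} \<union> {p. length p = n}" by auto
  have e2: "(\<Sum>p\<in>{p. length p < Suc n}. if p \<in> leaves T then ?t p else 0)
       = (\<Sum>p\<in>{p. length p = n}. if p \<in> leaves T then ?t p else 0) + (\<Sum>p\<in>{p. length p < n}. if p \<in> leaves T then ?t p else 0)"
    unfolding U by (subst add.commute, rule sum.union_disjoint[OF fin_len_lt fin_len_eq]) auto
  have e3: "(\<Sum>p\<in>{p. length p = n}. if p \<in> leaves T then 0 else ?t p) + (\<Sum>p\<in>{p. length p = n}. if p \<in> leaves T then ?t p else 0)
      = (\<Sum>p\<in>{p. length p = n}. ?t p)"
    by (simp add: sum.distrib[symmetric] if_distrib cong: if_cong)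
  show ?case unfolding e1 e2 add.assoc[symmetric] e3 by (rule Suc.IH)
qed



lemma sum_delta_mult: "(i::nat) < n \<Longrightarrow> (\<Sum>y<n. g y * (if y = i then 1 else 0)) = (g i :: complex)"
  by (simp add: if_distrib[where f="\<lambda>x. _ * x"] cong: if_cong)

lemma sum_two_delta:
  assumes "(i::nat) < n" "j < n"
  shows "(\<Sum>y<n. g y * ((if y = i then 1 else 0) + c * (if y = j then 1 else 0))) = g i + c * (g j :: complex)"
proof -
  have "(\<Sum>y<n. g y * ((if y = i then 1 else 0) + c * (if y = j then 1 else 0)))
      = (\<Sum>y<n. g y * (if y = i then 1 else 0)) + c * (\<Sum>y<n. g y * (if y = j then 1 else 0))"
    by (simp add: distrib_left sum.distrib sum_distrib_left mult_ac)
  thus ?thesis using assms by (simp add: sum_delta_mult)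
qed

lemma qf_two:
  assumes "(i::nat) < n" "j < n"
  shows "qf {..<n} A (\<lambda>x. (if x = i then 1 else 0) + c * (if x = j then 1 else 0))
       = A i i + c * A i j + cnj c * (A j i + c * A j j)"
proof -
  let ?v = "\<lambda>x. (if x = i then 1 else 0) + c * (if x = j then 1 else 0)"
  have "qf {..<n} A ?v = (\<Sum>x<n. (A x i + c * A x j) * cnj (?v x))"
    unfolding qf_def by (intro sum.cong refl)
      (simp add: sum_two_delta[OF assms, of "\<lambda>y. A _ y", symmetric] sum_distrib_left mult_ac)
  also have "\<dots> = (\<Sum>x<n. (A x i + c * A x j) * ((if x = i then 1 else 0) + cnj c * (if x = j then 1 else 0)))"
    by (intro sum.cong refl) (simp add: cnj_if)
  also have "\<dots> = A i i + c * A i j + cnj c * (A j i + c * A j j)"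
    by (rule sum_two_delta[OF assms])
  finally show ?thesis .
qed

lemma nonneg_cmod: "0 \<le> (z::complex) \<Longrightarrow> cmod z = Re z"
  by (simp add: less_eq_complex_def cmod_eq_Re)

lemma norm4: "cmod (a - b - \<i>*c + \<i>*d) \<le> cmod a + cmod b + cmod c + cmod d"
proof -
  have "cmod (a - b - \<i>*c + \<i>*d) \<le> cmod (a - b - \<i>*c) + cmod (\<i>*d)" by (rule norm_triangle_ineq)
  moreover have "cmod (a - b - \<i>*c) \<le> cmod (a - b) + cmod (\<i>*c)" by (rule norm_triangle_ineq4)
  moreover have "cmod (a - b) \<le> cmod a + cmod b" by (rule norm_triangle_ineq4)
  ultimately show ?thesis by (simp add: norm_mult)
qed

lemma psd_diag: "psd n A \<Longrightarrow> k < n \<Longrightarrow> 0 \<le> A k k"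
proof -
  assume "psd n A" "k < n"
  hence "0 \<le> qf {..<n} A (\<lambda>x. (if x = k then 1 else 0) + 0 * (if x = k then 1 else 0))"
    by (simp add: psd_iff psdS_def)
  thus ?thesis using qf_two[OF \<open>k<n\<close> \<open>k<n\<close>, of A 0] by simp
qed

lemma psd_re_diag_le: "psd n A \<Longrightarrow> k < n \<Longrightarrow> Re (A k k) \<le> Re (mtrace n A)"
proof -
  assume a: "psd n A" "k < n"
  have "Re (mtrace n A) = (\<Sum>i<n. Re (A i i))" unfolding mtrace_def by simp
  moreover have "Re (A k k) \<le> (\<Sum>i<n. Re (A i i))"
    by (rule member_le_sum) (use a psd_diag in \<open>auto simp: less_eq_complex_def\<close>)
  ultimately show ?thesis by simp
qed

lemma psd_tr_nonneg: "psd n A \<Longrightarrow> 0 \<le> Re (mtrace n A)"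
  unfolding mtrace_def using psd_diag by (auto simp: less_eq_complex_def intro!: sum_nonneg)

lemma psd_entry:
  assumes A: "psd n A"
  shows "cmod (A i j) \<le> 2 * Re (mtrace n A)"
proof (cases "i < n \<and> j < n")
  case False
  hence "A i j = 0" using A unfolding psd_def is_mat_def by auto
  thus ?thesis using psd_tr_nonneg[OF A] by simp
next
  case True
  hence i: "i < n" and j: "j < n" by auto
  define q where "q c = qf {..<n} A (\<lambda>x. (if x = i then 1 else 0) + c * (if x = j then 1 else 0))" for c
  have qe: "q c = A i i + c * A i j + cnj c * (A j i + c * A j j)" for c
    unfolding q_def by (rule qf_two[OF i j])
  have qn: "0 \<le> q c" for c using A unfolding q_def psd_iff psdS_def by blast
  have e: "A i j = (q 1 - q (-1) - \<i> * q \<i> + \<i> * q (-\<i>)) / 4"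
    unfolding qe by (simp add: field_simps)
  have "cmod (A i j) = cmod (q 1 - q (-1) - \<i> * q \<i> + \<i> * q (-\<i>)) / 4"
    by (subst e, subst norm_divide) simp
  also have "\<dots> \<le> (cmod (q 1) + cmod (q (-1)) + cmod (q \<i>) + cmod (q (-\<i>))) / 4"
    using norm4 by (simp add: divide_right_mono)
  also have "\<dots> = (Re (q 1) + Re (q (-1)) + Re (q \<i>) + Re (q (-\<i>))) / 4"
    using qn nonneg_cmod by simp
  also have "\<dots> = Re (A i i) + Re (A j j)"
    unfolding qe by (simp add: algebra_simps)
  also have "\<dots> \<le> 2 * Re (mtrace n A)"
    using psd_re_diag_le[OF A i] psd_re_diag_le[OF A j] by simp
  finally show ?thesis .
qed



definition wv :: "nat \<Rightarrow> nat \<Rightarrow> nat \<Rightarrow> nat \<Rightarrow> complex" where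
  "wv k l t a = (if a = k then 1 else 0) + \<i>^t * (if a = l then 1 else 0)"

definition Pm :: "nat \<Rightarrow> nat \<Rightarrow> nat \<Rightarrow> nat \<Rightarrow> cmat" where
  "Pm n k l t = (\<lambda>a b. if a < n \<and> b < n then wv k l t a * cnj (wv k l t b) else 0)"

lemma Pm_psd: "psd n (Pm n k l t)"
proof -
  have "is_mat n (Pm n k l t)" unfolding is_mat_def Pm_def by auto
  moreover have "psdS {..<n} (Pm n k l t)"
    unfolding psdS_def
  proof
    fix v
    define s where "s = (\<Sum>b<n. cnj (wv k l t b) * v b)"
    have "qf {..<n} (Pm n k l t) v = (\<Sum>a<n. cnj (v a) * wv k l t a) * s"
      unfolding qf_def Pm_def s_def by (simp add: sum_distrib_left sum_distrib_right mult_ac)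
    also have "(\<Sum>a<n. cnj (v a) * wv k l t a) = cnj s" unfolding s_def by (simp add: mult_ac)
    finally have "qf {..<n} (Pm n k l t) v = cnj s * s" .
    also have "\<dots> = complex_of_real ((cmod s)^2)" by (simp only: complex_norm_square mult.commute)
    moreover have "0 \<le> complex_of_real ((cmod s)^2)"
      by (simp only: less_eq_complex_def Re_complex_of_real Im_complex_of_real zero_complex.simps) simp
    ultimately show "0 \<le> qf {..<n} (Pm n k l t) v" by simp
  qed
  ultimately show ?thesis by (simp add: psd_iff)
qed

lemma four_sum: "(\<Sum>t<(4::nat). f t) = f 0 + f 1 + f 2 + f 3"
  by (simp add: eval_nat_numeral)

lemma unit_decomp:
  assumes "k < n" "l < n"
  shows "unitm k l = (\<lambda>a b. \<Sum>t<4. (\<i>^t / 4) * Pm n k l t a b)"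
proof (intro ext)
  fix a b
  show "unitm k l a b = (\<Sum>t<4. (\<i>^t / 4) * Pm n k l t a b)"
  proof (cases "a < n \<and> b < n")
    case False thus ?thesis using assms unfolding unitm_def Pm_def by auto
  next
    case True
    thus ?thesis unfolding four_sum unitm_def Pm_def wv_def
      by (auto simp: field_simps eval_nat_numeral)
  qed
qed

lemma summable_sum_fin:
  fixes f :: "'a \<Rightarrow> 'p \<Rightarrow> complex"
  assumes "finite S" "\<And>x. x \<in> S \<Longrightarrow> f x summable_on A"
  shows "(\<lambda>p. \<Sum>x\<in>S. f x p) summable_on A"
  using assms by (induction S rule: finite_induct) (auto intro: summable_on_add)

lemma infsum_sum_fin:
  fixes f :: "'a \<Rightarrow> 'p \<Rightarrow> complex"
  assumes "finite S" "\<And>x. x \<in> S \<Longrightarrow> f x summable_on A"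
  shows "infsum (\<lambda>p. \<Sum>x\<in>S. f x p) A = (\<Sum>x\<in>S. infsum (f x) A)"
  using assms
proof (induction S rule: finite_induct)
  case empty thus ?case by simp
next
  case (insert x S)
  have "infsum (\<lambda>p. \<Sum>y\<in>insert x S. f y p) A = infsum (\<lambda>p. f x p + (\<Sum>y\<in>S. f y p)) A"
    using insert by simp
  also have "\<dots> = infsum (f x) A + infsum (\<lambda>p. \<Sum>y\<in>S. f y p) A"
  proof (rule infsum_add)
    show "f x summable_on A" using insert.prems by simp
    show "(\<lambda>p. \<Sum>y\<in>S. f y p) summable_on A" by (rule summable_sum_fin) (use insert in auto)
  qed
  finally show ?case using insert by simp
qed

definition imap :: "'p set \<Rightarrow> ('p \<Rightarrow> cmat \<Rightarrow> cmat) \<Rightarrow> cmat \<Rightarrow> cmat" where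
  "imap L \<Phi> \<rho> = (\<lambda>i j. \<Sum>\<^sub>\<infinity>p\<in>L. \<Phi> p \<rho> i j)"

definition bnd :: "nat \<Rightarrow> 'p set \<Rightarrow> ('p \<Rightarrow> cmat \<Rightarrow> cmat) \<Rightarrow> bool" where
  "bnd n L \<Phi> \<longleftrightarrow> (\<forall>\<rho> F. psd n \<rho> \<longrightarrow> finite F \<longrightarrow> F \<subseteq> L \<longrightarrow> (\<Sum>p\<in>F. Re (mtrace n (\<Phi> p \<rho>))) \<le> Re (mtrace n \<rho>))"

lemma im_tr_summable:
  assumes G: "\<And>p. good n (\<Phi> p)" and B: "bnd n L \<Phi>" and r: "psd n \<rho>"
  shows "(\<lambda>p. Re (mtrace n (\<Phi> p \<rho>))) summable_on L"
proof (rule nonneg_bdd_above_summable_on)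
  show "\<And>p. p \<in> L \<Longrightarrow> 0 \<le> Re (mtrace n (\<Phi> p \<rho>))"
    using G r gcp_psd psd_tr_nonneg unfolding good_def by blast
  show "bdd_above (sum (\<lambda>p. Re (mtrace n (\<Phi> p \<rho>))) ` {F. F \<subseteq> L \<and> finite F})"
    using B r unfolding bnd_def by (intro bdd_aboveI2[where M="Re (mtrace n \<rho>)"]) auto
qed

lemma im_psd_summable:
  assumes G: "\<And>p. good n (\<Phi> p)" and B: "bnd n L \<Phi>" and r: "psd n \<rho>"
  shows "(\<lambda>p. \<Phi> p \<rho> i j) summable_on L"
proof -
  let ?h = "\<lambda>p. 2 * Re (mtrace n (\<Phi> p \<rho>))"
  have ps: "\<And>p. psd n (\<Phi> p \<rho>)" using G r gcp_psd unfolding good_def by blast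
  have "?h summable_on L" using im_tr_summable[OF G B r] by (rule summable_on_cmult_right)
  moreover have "\<And>p. norm (?h p) = ?h p" using ps psd_tr_nonneg by simp
  ultimately have "Infinite_Sum.abs_summable_on ?h L" by simp
  hence "Infinite_Sum.abs_summable_on (\<lambda>p. \<Phi> p \<rho> i j) L"
    by (rule Infinite_Sum.abs_summable_on_comparison_test) (use ps psd_entry psd_tr_nonneg in auto)
  thus ?thesis using summable_on_iff_abs_summable_on_complex by blast
qed

lemma lin_unit_expand:
  assumes l: "lin E" and kl: "k < n" "l < n"
  shows "E (unitm k l) = (\<lambda>i j. \<Sum>t<4. (\<i>^t / 4) * E (Pm n k l t) i j)"
  unfolding unit_decomp[OF kl] by (rule lin_sum[OF l]) simp

lemma im_summable:
  assumes G: "\<And>p. good n (\<Phi> p)" and B: "bnd n L \<Phi>" and r: "is_mat n \<rho>"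
  shows "(\<lambda>p. \<Phi> p \<rho> i j) summable_on L"
proof -
  have e: "\<Phi> p \<rho> i j = (\<Sum>k<n. \<Sum>l<n. \<rho> k l * (\<Sum>t<4. (\<i>^t / 4) * \<Phi> p (Pm n k l t) i j))" for p
  proof -
    have l: "lin (\<Phi> p)" using G good_def by blast
    have "\<Phi> p \<rho> i j = (\<Sum>k<n. \<Sum>l<n. \<rho> k l * \<Phi> p (unitm k l) i j)"
      using lin_expand[OF l r] by simp
    also have "\<dots> = (\<Sum>k<n. \<Sum>l<n. \<rho> k l * (\<Sum>t<4. (\<i>^t / 4) * \<Phi> p (Pm n k l t) i j))"
      by (intro sum.cong refl) (simp add: lin_unit_expand[OF l])
    finally show ?thesis .
  qed
  show ?thesis unfolding e
    by (intro summable_sum_fin summable_on_cmult_right im_psd_summable[OF G B Pm_psd]) auto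
qed

lemma im_mat:
  assumes G: "\<And>p. good n (\<Phi> p)"
  shows "matp n (imap L \<Phi>)"
  unfolding matp_def
proof (intro allI impI)
  fix A assume A: "is_mat n A"
  have "\<And>p. is_mat n (\<Phi> p A)" using G A unfolding good_def matp_def by blast
  thus "is_mat n (imap L \<Phi> A)" unfolding is_mat_def imap_def by simp
qed

lemma im_lin:
  assumes G: "\<And>p. good n (\<Phi> p)" and B: "bnd n L \<Phi>"
  shows "linear_on n (imap L \<Phi>)"
  unfolding linear_on_def
proof (intro allI impI ext)
  fix A B c i j assume A: "is_mat n A" and Bm: "is_mat n B"
  have "\<And>p. \<Phi> p (\<lambda>i j. c * A i j + B i j) i j = c * \<Phi> p A i j + \<Phi> p B i j"
    using G unfolding good_def lin_def by simp
  hence "imap L \<Phi> (\<lambda>i j. c * A i j + B i j) i j = (\<Sum>\<^sub>\<infinity>p\<in>L. c * \<Phi> p A i j + \<Phi> p B i j)"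
    unfolding imap_def by simp
  also have "\<dots> = (\<Sum>\<^sub>\<infinity>p\<in>L. c * \<Phi> p A i j) + (\<Sum>\<^sub>\<infinity>p\<in>L. \<Phi> p B i j)"
    by (intro infsum_add summable_on_cmult_right im_summable[OF G B A] im_summable[OF G B Bm])
  also have "\<dots> = c * imap L \<Phi> A i j + imap L \<Phi> B i j"
    unfolding imap_def by (simp add: infsum_cmult_right im_summable[OF G B A])
  finally show "imap L \<Phi> (\<lambda>i j. c * A i j + B i j) i j = c * imap L \<Phi> A i j + imap L \<Phi> B i j" .
qed

lemma im_gcp:
  assumes G: "\<And>p. good n (\<Phi> p)" and B: "bnd n L \<Phi>"
  shows "gcp n (imap L \<Phi>)"
  unfolding gcp_def
proof (intro allI impI)
  fix J :: "nat set" and X :: "nat \<times> nat \<Rightarrow> nat \<times> nat \<Rightarrow> complex"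
  assume J: "finite J" and X: "psdS ({..<n} \<times> J) X"
  let ?A = "{..<n} \<times> J"
  have su: "\<And>i j a b. i < n \<Longrightarrow> j < n \<Longrightarrow> (\<lambda>p. \<Phi> p (unitm i j) a b) summable_on L"
    by (rule im_summable[OF G B unitm_mat])
  have sa: "\<And>x y. (\<lambda>p. amplJ n (\<Phi> p) X x y) summable_on L"
    unfolding amplJ_def by (intro summable_sum_fin summable_on_cmult_right su) auto
  have ea: "\<And>x y. amplJ n (imap L \<Phi>) X x y = (\<Sum>\<^sub>\<infinity>p\<in>L. amplJ n (\<Phi> p) X x y)"
  proof -
    fix x y :: "nat \<times> nat"
    have "amplJ n (imap L \<Phi>) X x y = (\<Sum>i<n. \<Sum>j<n. (\<Sum>\<^sub>\<infinity>p\<in>L. X (i, snd x) (j, snd y) * \<Phi> p (unitm i j) (fst x) (fst y)))"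
      unfolding amplJ_def imap_def by (intro sum.cong refl) (simp add: infsum_cmult_right su)
    also have "\<dots> = (\<Sum>i<n. (\<Sum>\<^sub>\<infinity>p\<in>L. \<Sum>j<n. X (i, snd x) (j, snd y) * \<Phi> p (unitm i j) (fst x) (fst y)))"
      by (intro sum.cong refl infsum_sum_fin[symmetric] summable_on_cmult_right su) auto
    also have "\<dots> = (\<Sum>\<^sub>\<infinity>p\<in>L. \<Sum>i<n. \<Sum>j<n. X (i, snd x) (j, snd y) * \<Phi> p (unitm i j) (fst x) (fst y))"
      by (intro infsum_sum_fin[symmetric] summable_sum_fin summable_on_cmult_right su) auto
    finally show "amplJ n (imap L \<Phi>) X x y = (\<Sum>\<^sub>\<infinity>p\<in>L. amplJ n (\<Phi> p) X x y)"
      unfolding amplJ_def .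
  qed
  show "psdS ?A (amplJ n (imap L \<Phi>) X)"
    unfolding psdS_def
  proof
    fix v
    have fin: "finite ?A" using J by simp
    have "qf ?A (amplJ n (imap L \<Phi>) X) v = (\<Sum>x\<in>?A. \<Sum>y\<in>?A. (\<Sum>\<^sub>\<infinity>p\<in>L. cnj (v x) * amplJ n (\<Phi> p) X x y * v y))"
      unfolding qf_def ea
      by (intro sum.cong refl) (simp add: infsum_cmult_right infsum_cmult_left sa summable_on_cmult_right)
    also have "\<dots> = (\<Sum>x\<in>?A. (\<Sum>\<^sub>\<infinity>p\<in>L. \<Sum>y\<in>?A. cnj (v x) * amplJ n (\<Phi> p) X x y * v y))"
      by (intro sum.cong refl infsum_sum_fin[symmetric] fin summable_on_cmult_left summable_on_cmult_right sa)
    also have "\<dots> = (\<Sum>\<^sub>\<infinity>p\<in>L. qf ?A (amplJ n (\<Phi> p) X) v)"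
      unfolding qf_def
      by (intro infsum_sum_fin[symmetric] fin summable_sum_fin summable_on_cmult_left summable_on_cmult_right sa)
    finally have e: "qf ?A (amplJ n (imap L \<Phi>) X) v = (\<Sum>\<^sub>\<infinity>p\<in>L. qf ?A (amplJ n (\<Phi> p) X) v)" .
    have "(\<lambda>p. qf ?A (amplJ n (\<Phi> p) X) v) summable_on L"
      unfolding qf_def by (intro summable_sum_fin fin summable_on_cmult_left summable_on_cmult_right sa)
    moreover have "\<And>p. 0 \<le> qf ?A (amplJ n (\<Phi> p) X) v"
      using G J X unfolding good_def gcp_def psdS_def by blast
    ultimately show "0 \<le> qf ?A (amplJ n (imap L \<Phi>) X) v"
      unfolding e by (rule infsum_nonneg_complex)
  qed
qed

lemma im_tni:
  assumes G: "\<And>p. good n (\<Phi> p)" and B: "bnd n L \<Phi>"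
  shows "trace_nonincreasing n (imap L \<Phi>)"
  unfolding trace_nonincreasing_def
proof (intro allI impI)
  fix \<rho> assume r: "psd n \<rho>"
  have rm: "is_mat n \<rho>" using r psd_def by blast
  have "mtrace n (imap L \<Phi> \<rho>) = (\<Sum>\<^sub>\<infinity>p\<in>L. mtrace n (\<Phi> p \<rho>))"
    unfolding mtrace_def imap_def by (rule infsum_sum_fin[symmetric]) (auto intro: im_summable[OF G B rm])
  hence "Re (mtrace n (imap L \<Phi> \<rho>)) = Re (\<Sum>\<^sub>\<infinity>p\<in>L. mtrace n (\<Phi> p \<rho>))" by simp
  also have "\<dots> = (\<Sum>\<^sub>\<infinity>p\<in>L. Re (mtrace n (\<Phi> p \<rho>)))"
    by (rule infsum_Re[symmetric]) (unfold mtrace_def, intro summable_sum_fin im_summable[OF G B rm], auto)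
  also have "\<dots> \<le> Re (mtrace n \<rho>)"
    by (rule infsum_le_finite_sums[OF im_tr_summable[OF G B r]]) (use B r in \<open>auto simp: bnd_def\<close>)
  finally show "Re (mtrace n (imap L \<Phi> \<rho>)) \<le> Re (mtrace n \<rho>)" .
qed

lemma im_qc:
  assumes G: "\<And>p. good n (\<Phi> p)" and B: "bnd n L \<Phi>" and n: "0 < n"
  shows "quantum_channel n (imap L \<Phi>)"
  unfolding quantum_channel_def
  using gcp_imp_cp[OF im_gcp[OF G B] n im_mat[OF G] im_lin[OF G B]] im_tni[OF G B] by blast



lemma good_zero: "good n (\<lambda>\<rho>. (\<lambda>_ _. 0))"
proof -
  have "amplJ n (\<lambda>\<rho>. (\<lambda>_ _. 0)) X = (\<lambda>_ _. 0)" for X :: "nat \<times> nat \<Rightarrow> nat \<times> nat \<Rightarrow> complex"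
    unfolding amplJ_def by simp
  moreover have "psdS A (\<lambda>_ _. 0)" for A :: "(nat \<times> nat) set" unfolding psdS_def qf_def by simp
  ultimately have "gcp n (\<lambda>\<rho>. (\<lambda>_ _. 0))" unfolding gcp_def by simp
  moreover have "lin (\<lambda>\<rho>. (\<lambda>_ _. 0))" unfolding lin_def by simp
  moreover have "matp n (\<lambda>\<rho>. (\<lambda>_ _. 0))" unfolding matp_def is_mat_def by simp
  ultimately show ?thesis unfolding good_def by blast
qed

lemma ns_good_all:
  assumes ft: "fault_tree N r S0 \<sigma>0 T" and wf: "wf_prog N S0"
  shows "good (2^N) (node_state T p)"
proof (cases "T p = None")
  case True
  hence "node_state T p = (\<lambda>\<rho>. (\<lambda>_ _. 0))" by (simp add: node_state_def fun_eq_iff)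
  thus ?thesis using good_zero by simp
next
  case False thus ?thesis using ns_good[OF ft wf] by blast
qed

lemma leaves_bnd:
  assumes ft: "fault_tree N r S0 \<sigma>0 T" and wf: "wf_prog N S0"
  shows "bnd (2^N) (leaves T) (node_state T)"
  unfolding bnd_def
proof (intro allI impI)
  fix \<rho> F assume r: "psd (2^N) \<rho>" and F: "finite F" and FL: "F \<subseteq> leaves T"
  have rm: "is_mat (2^N) \<rho>" using r psd_def by blast
  let ?t = "\<lambda>p. Re (mtrace (2^N) (node_state T p \<rho>))"
  have tn: "\<And>p. 0 \<le> ?t p"
    using ns_good_all[OF ft wf] gcp_psd r psd_tr_nonneg unfolding good_def by blast
  obtain m where m: "\<forall>x\<in>length ` F. x < m" using finite_nat_set_iff_bounded F by blast
  have sub: "F \<subseteq> {p. length p < m}" using m by auto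
  have "(\<Sum>p\<in>F. ?t p) = (\<Sum>p\<in>F. if p \<in> leaves T then ?t p else 0)"
    using FL by (intro sum.cong refl) auto
  also have "\<dots> \<le> (\<Sum>p\<in>{p. length p < m}. if p \<in> leaves T then ?t p else 0)"
    by (rule sum_mono2[OF fin_len_lt sub]) (simp add: tn)
  also have "\<dots> = Re (\<Sum>p\<in>{p. length p < m}. if p \<in> leaves T then mtrace (2^N) (node_state T p \<rho>) else 0)"
    by (simp add: if_distrib[where f=Re] cong: if_cong)
  also have "\<dots> = Re (mtrace (2^N) \<rho>) - (\<Sum>p\<in>{p. length p = m}. ?t p)"
    using arg_cong[OF level[OF ft wf rm, of m], of Re] by simp
  also have "\<dots> \<le> Re (mtrace (2^N) \<rho>)" using tn by (simp add: sum_nonneg)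
  finally show "(\<Sum>p\<in>F. ?t p) \<le> Re (mtrace (2^N) \<rho>)" .
qed

lemma tree_map_imap: "tree_map T = imap (leaves T) (node_state T)"
  unfolding tree_map_def imap_def by (rule ext) simp

theorem proposition1:
  fixes N r :: nat and S0 :: "('x, 'v::{zero,one}) prog" and \<sigma>0 :: "'x \<Rightarrow> 'v"
    and T :: "('x, 'v) tree"
  assumes "wf_prog N S0"
    and "fault_tree N r S0 \<sigma>0 T"
  shows "(\<forall>\<rho>. is_mat (2^N) \<rho> \<longrightarrow>
            (\<forall>i j. (\<lambda>p. node_state T p \<rho> i j) summable_on leaves T))
         \<and> quantum_channel (2^N) (tree_map T)"
proof
  have G: "\<And>p. good (2^N) (node_state T p)" by (rule ns_good_all[OF assms(2,1)])
  have B: "bnd (2^N) (leaves T) (node_state T)" by (rule leaves_bnd[OF assms(2,1)])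
  show "\<forall>\<rho>. is_mat (2^N) \<rho> \<longrightarrow> (\<forall>i j. (\<lambda>p. node_state T p \<rho> i j) summable_on leaves T)"
    using im_summable[OF G B] by blast
  show "quantum_channel (2^N) (tree_map T)"
    unfolding tree_map_imap by (rule im_qc[OF G B]) simp
qed

end
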